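(* Let $H$, $d$, $(X,\mu)$, $\mathcal{A}$, $(N_s)$, $\delta_r,s_r,\sigma_s$ be as in the context, and fix an integer $r\ge3$. Let $\mathcal{Q}$ be a partition of $[r]=\{1,\dots,r\}$ with $|\mathcal{Q}|\ge2$, let $0\le\alpha<\beta$ and let $s>s_r+r$ be an integer. Then for every $\underline h=(h_1,\dots,h_r)\in\Delta_{\mathcal{Q}}(\alpha,\beta)$ and every $f\in\mathcal{A}$, $$|\mathrm{cum}_{[r]}(h_1\cdot f,\dots,h_r\cdot f)|\le C_{r,s}\,e^{-(\beta\delta_r-r\alpha\sigma_s)}N_s(f)^r,$$ where $C_{r,s}$ depends only on $r$ and $s$.
   Context: $H$ is a locally compact second countable group with left-invariant metric $d$, acting measure-preservingly on a probability space $(X,\mu)$; $h\cdot f=f\circ h^{-1}$. $\mathcal{A}\subset L^\infty(X,\mu)$ is an $H$-invariant subalgebra and $(N_s)_{s\ge1}$ seminorms on it with, for all $s$ (constants depending only on $s$): $N_s(f)\ll N_{s+1}(f)$; $\|f\|_{L^\infty}\ll N_s(f)$; $N_s(h\cdot f)\ll e^{\sigma_s d(h,e)}N_s(f)$ for some $\sigma_s>0$; $N_s(f_1f_2)\ll N_{s+1}(f_1)N_{s+1}(f_2)$. Exponential mixing of all orders: for every $k\ge2$ there are $\delta_k>0$ and an integer $s_k>0$ with $\big|\mu(\prod_{i=1}^k h_i\cdot f_i)-\prod_i\mu(f_i)\big|\ll_{k,s}e^{-\delta_k\min_{i\ne j}d(h_i,h_j)}\prod_iN_s(f_i)$ for all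 $s>s_k$, $f_i\in\mathcal{A}$, $h_i\in H$; $(\sigma_s)$ and $(s_k)$ are increasing, $(\delta_k)$ decreasing, and $\delta_k<k\sigma_s$ for all $k,s$. For $\underline h\in H^r$, $I,J\subset[r]$: $d^I(\underline h)=\max\{d(h_i,h_j):i,j\in I\}$, $d_{I,J}(\underline h)=\min\{d(h_i,h_j):i\in I,j\in J\}$; for a partition $\mathcal{Q}$, $d^{\mathcal{Q}}(\underline h)=\max_{I\in\mathcal{Q}}d^I(\underline h)$ and $d_{\mathcal{Q}}(\underline h)=\min\{d_{I,J}(\underline h):I\ne J\in\mathcal{Q}\}$; $\Delta_{\mathcal{Q}}(\alpha,\beta)=\{\underline h\in H^r:d^{\mathcal{Q}}(\underline h)\le\alpha,\ d_{\mathcal{Q}}(\underline h)>\beta\}$. Cumulant: with $\mathfrak{P}_{[r]}$ the set of cyclically ordered partitions of $[r]$ (partitions into non-empty blocks with a cyclic order on the blocks), $\mathrm{cum}_{[r]}(f_1,\dots,f_r)=\sum_{\mathcal{P}\in\mathfrak{P}_{[r]}}(-1)^{|\mathcal{P}|-1}\prod_{I\in\mathcal{P}}\mu(\prod_{i\in I}f_i)$. *)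

theory Defs
  imports "HOL-Probability.Probability" "HOL-Library.Disjoint_Sets"
begin

definition ordered_partitions :: "'a set \<Rightarrow> 'a set list set" where
  "ordered_partitions A = {L. distinct L \<and> partition_on A (set L)}"

text \<open>A cyclically ordered partition is an ordered partition modulo rotation,
  i.e. the class of all rotations of an ordered partition.\<close>
definition cyc_partitions :: "'a set \<Rightarrow> 'a set list set set" where
  "cyc_partitions A = (\<lambda>L. range (\<lambda>k. rotate k L)) ` ordered_partitions A"

definition cblocks :: "'a set list set \<Rightarrow> 'a set set" where
  "cblocks C = (\<Union>L\<in>C. set L)"

definition cum :: "'x measure \<Rightarrow> nat set \<Rightarrow> (nat \<Rightarrow> 'x \<Rightarrow> real) \<Rightarrow> real" where
  "cum M A f = (\<Sum>C\<in>cyc_partitions A. (-1::real) ^ (card (cblocks C) - 1) *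
       (\<Prod>I\<in>cblocks C. integral\<^sup>L M (\<lambda>x. \<Prod>i\<in>I. f i x)))"

definition dup :: "nat set \<Rightarrow> (nat \<Rightarrow> 'h::metric_space) \<Rightarrow> real" where
  "dup I h = Max {dist (h i) (h j) | i j. i \<in> I \<and> j \<in> I}"

definition dlow :: "nat set \<Rightarrow> nat set \<Rightarrow> (nat \<Rightarrow> 'h::metric_space) \<Rightarrow> real" where
  "dlow I J h = Min {dist (h i) (h j) | i j. i \<in> I \<and> j \<in> J}"

definition dupQ :: "nat set set \<Rightarrow> (nat \<Rightarrow> 'h::metric_space) \<Rightarrow> real" where
  "dupQ Q h = Max {dup I h | I. I \<in> Q}"

definition dlowQ :: "nat set set \<Rightarrow> (nat \<Rightarrow> 'h::metric_space) \<Rightarrow> real" where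
  "dlowQ Q h = Min {dlow I J h | I J. I \<in> Q \<and> J \<in> Q \<and> I \<noteq> J}"

text \<open>Delta_Q(alpha,beta); tuples in H^r are functions nat => H of which only the
  entries indexed by [r] = {1..r} matter.\<close>
definition DeltaQ :: "nat set set \<Rightarrow> real \<Rightarrow> real \<Rightarrow> (nat \<Rightarrow> 'h::metric_space) set" where
  "DeltaQ Q \<alpha> \<beta> = {h. dupQ Q h \<le> \<alpha> \<and> dlowQ Q h > \<beta>}"

text \<open>H is a group (written additively, not assumed commutative), whose topology is
  given by a left-invariant metric dist, locally compact, second countable, with
  continuous group operations. act is a measure-preserving action of H on the
  probability space M. The action on functions is (h.f)(x) = f(act (-h) x).\<close>
definition lact :: "('h::group_add \<Rightarrow> 'x \<Rightarrow> 'x) \<Rightarrow> 'h \<Rightarrow> ('x \<Rightarrow> real) \<Rightarrow> 'x \<Rightarrow> real" where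
  "lact act h f = (\<lambda>x. f (act (- h) x))"

definition setting ::
  "'x measure \<Rightarrow> ('h::{group_add, metric_space, second_countable_topology} \<Rightarrow> 'x \<Rightarrow> 'x)
   \<Rightarrow> ('x \<Rightarrow> real) set \<Rightarrow> (nat \<Rightarrow> ('x \<Rightarrow> real) \<Rightarrow> real)
   \<Rightarrow> (nat \<Rightarrow> real) \<Rightarrow> (nat \<Rightarrow> nat) \<Rightarrow> (nat \<Rightarrow> real) \<Rightarrow> bool" where
  "setting M act \<A> N \<delta> sk \<sigma> \<longleftrightarrow>
    \<comment> \<open>H: locally compact second countable group with left-invariant metric\<close>
    locally compact (UNIV :: 'h set) \<and>
    continuous_on UNIV (\<lambda>p::'h \<times> 'h. fst p + snd p) \<and>
    continuous_on UNIV (\<lambda>x::'h. - x) \<and>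
    (\<forall>g x y::'h. dist (g + x) (g + y) = dist x y) \<and>
    \<comment> \<open>measure-preserving action on a probability space\<close>
    prob_space M \<and>
    (\<lambda>p. act (fst p) (snd p)) \<in> measurable (borel \<Otimes>\<^sub>M M) M \<and>
    (\<forall>h. act h \<in> measurable M M \<and> distr M M (act h) = M) \<and>
    (\<forall>x\<in>space M. act 0 x = x) \<and>
    (\<forall>g h. \<forall>x\<in>space M. act (g + h) x = act g (act h x)) \<and>
    \<comment> \<open>A: H-invariant subalgebra of L-infinity\<close>
    (\<forall>f\<in>\<A>. f \<in> borel_measurable M) \<and>
    (\<forall>f\<in>\<A>. esssup M (\<lambda>x. ereal \<bar>f x\<bar>) < \<infinity>) \<and>
    (\<lambda>x. 0) \<in> \<A> \<and>
    (\<forall>f\<in>\<A>. \<forall>g\<in>\<A>. (\<lambda>x. f x + g x) \<in> \<A>) \<and>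
    (\<forall>f\<in>\<A>. \<forall>g\<in>\<A>. (\<lambda>x. f x * g x) \<in> \<A>) \<and>
    (\<forall>c. \<forall>f\<in>\<A>. (\<lambda>x. c * f x) \<in> \<A>) \<and>
    (\<forall>h. \<forall>f\<in>\<A>. lact act h f \<in> \<A>) \<and>
    \<comment> \<open>N_s, s >= 1, are seminorms on A\<close>
    (\<forall>s\<ge>1. \<forall>f\<in>\<A>. 0 \<le> N s f) \<and>
    (\<forall>s\<ge>1. \<forall>f\<in>\<A>. \<forall>g\<in>\<A>. N s (\<lambda>x. f x + g x) \<le> N s f + N s g) \<and>
    (\<forall>s\<ge>1. \<forall>c. \<forall>f\<in>\<A>. N s (\<lambda>x. c * f x) = \<bar>c\<bar> * N s f) \<and>
    \<comment> \<open>properties of the seminorms, constants depending only on s\<close>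
    (\<forall>s\<ge>1. \<exists>C. \<forall>f\<in>\<A>. N s f \<le> C * N (s + 1) f) \<and>
    (\<forall>s\<ge>1. \<exists>C. \<forall>f\<in>\<A>. esssup M (\<lambda>x. ereal \<bar>f x\<bar>) \<le> ereal (C * N s f)) \<and>
    (\<forall>s\<ge>1. \<sigma> s > 0) \<and>
    (\<forall>s\<ge>1. \<exists>C. \<forall>f\<in>\<A>. \<forall>h. N s (lact act h f) \<le> C * exp (\<sigma> s * dist h 0) * N s f) \<and>
    (\<forall>s\<ge>1. \<exists>C. \<forall>f\<in>\<A>. \<forall>g\<in>\<A>. N s (\<lambda>x. f x * g x) \<le> C * N (s + 1) f * N (s + 1) g) \<and>
    \<comment> \<open>exponential mixing of all orders\<close>
    (\<forall>k\<ge>2. \<delta> k > 0 \<and> sk k > 0 \<and>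
       (\<forall>s>sk k. \<exists>C. \<forall>f. \<forall>h. (\<forall>i\<in>{1..k}. f i \<in> \<A>) \<longrightarrow>
          \<bar>integral\<^sup>L M (\<lambda>x. \<Prod>i\<in>{1..k}. lact act (h i) (f i) x)
             - (\<Prod>i\<in>{1..k}. integral\<^sup>L M (f i))\<bar>
          \<le> C * exp (- \<delta> k * Min {dist (h i) (h j) | i j. i \<in> {1..k} \<and> j \<in> {1..k} \<and> i \<noteq> j})
              * (\<Prod>i\<in>{1..k}. N s (f i)))) \<and>
    \<comment> \<open>monotonicity and compatibility of the exponents\<close>
    (\<forall>s s'. 1 \<le> s \<and> s \<le> s' \<longrightarrow> \<sigma> s \<le> \<sigma> s') \<and>
    (\<forall>k k'. 2 \<le> k \<and> k \<le> k' \<longrightarrow> sk k \<le> sk k') \<and>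
    (\<forall>k k'. 2 \<le> k \<and> k \<le> k' \<longrightarrow> \<delta> k' \<le> \<delta> k) \<and>
    (\<forall>k\<ge>2. \<forall>s\<ge>1. \<delta> k < real k * \<sigma> s)"

end

theory Submission
  imports Defs
begin


fun dl :: "'a set list \<Rightarrow> bool" where
  "dl [] = True"
| "dl (X # L) = (X \<inter> \<Union>(set L) = {} \<and> dl L)"

lemma dl_append: "dl (P @ Q) \<longleftrightarrow> dl P \<and> dl Q \<and> \<Union>(set P) \<inter> \<Union>(set Q) = {}"
  by (induction P) auto

lemma dl_iff: "{} \<notin> set L \<Longrightarrow> dl L \<longleftrightarrow> distinct L \<and> disjoint (set L)"
proof (induction L)
  case Nil
  then show ?case by auto
next
  case (Cons X L)
  then show ?case
    by (auto simp: pairwise_insert disjnt_def)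
qed

definition opart :: "'a set \<Rightarrow> 'a set list \<Rightarrow> bool" where
  "opart A L \<longleftrightarrow> {} \<notin> set L \<and> \<Union>(set L) = A \<and> dl L"

lemma opart_iff: "L \<in> ordered_partitions A \<longleftrightarrow> opart A L"
  unfolding ordered_partitions_def opart_def partition_on_def using dl_iff by blast

lemma opart_split: "opart A (P @ B # R) \<Longrightarrow> X \<union> Y = B \<Longrightarrow> X \<inter> Y = {} \<Longrightarrow> X \<noteq> {} \<Longrightarrow> Y \<noteq> {}
   \<Longrightarrow> opart A (P @ X # Y # R)"
  unfolding opart_def by (auto simp: dl_append)

lemma opart_merge: "opart A (P @ X # Y # R) \<Longrightarrow> opart A (P @ (X \<union> Y) # R)"
  unfolding opart_def by (auto simp: dl_append)

definition cumf :: "'a set \<Rightarrow> ('a set \<Rightarrow> real) \<Rightarrow> real" where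
  "cumf A m = (\<Sum>C\<in>cyc_partitions A. (-1::real) ^ (card (cblocks C) - 1) * (\<Prod>I\<in>cblocks C. m I))"

definition rot :: "'a list \<Rightarrow> 'a list set" where
  "rot L = range (\<lambda>k. rotate k L)"

lemma cblocks_rot: "cblocks (rot L) = set L"
  unfolding cblocks_def rot_def by auto

lemma rot_rotate: "L \<noteq> [] \<Longrightarrow> rot (rotate k L) = rot L"
proof -
  assume L: "L \<noteq> []"
  let ?n = "length L"
  have "rotate j L \<in> rot (rotate k L)" for j
  proof -
    have nk: "k \<le> ?n * k" using L by (cases L) auto
    have "rotate (j + ?n * k - k) (rotate k L) = rotate (j + ?n * k) L"
    proof -
      have "j + ?n * k - k + k = j + ?n * k" using nk by arith
      then show ?thesis by (simp add: rotate_rotate)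
    qed
    also have "\<dots> = rotate j L"
      by (metis rotate_conv_mod mod_mult_self2)
    finally show ?thesis unfolding rot_def by (metis rangeI)
  qed
  then show ?thesis unfolding rot_def by (auto simp: rotate_rotate)
qed

lemma opart_rotate: "opart A L \<Longrightarrow> opart A (rotate k L)"
  using opart_iff[of "rotate k L" A] opart_iff[of L A] unfolding ordered_partitions_def by simp

lemma opart_ne: "opart A L \<Longrightarrow> x \<in> A \<Longrightarrow> L \<noteq> []"
  unfolding opart_def by auto

lemma cyc_rot: "cyc_partitions A = rot ` ordered_partitions A"
  unfolding cyc_partitions_def rot_def by simp

lemma rot_self: "L \<in> rot L"
proof -
  have "rotate 0 L = L" by simp
  then show ?thesis unfolding rot_def by (metis rangeI)
qed

lemma cyc_reindex:
  assumes x0: "x0 \<in> A"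
  defines "T \<equiv> {L. opart A L \<and> x0 \<in> hd L}"
  shows "cyc_partitions A = rot ` T" "inj_on rot T"
proof -
  show "cyc_partitions A = rot ` T"
  proof
    show "rot ` T \<subseteq> cyc_partitions A"
    proof -
      have "T \<subseteq> ordered_partitions A" unfolding T_def using opart_iff by blast
      then show ?thesis unfolding cyc_rot by (rule image_mono)
    qed
    show "cyc_partitions A \<subseteq> rot ` T"
    proof
      fix C assume "C \<in> cyc_partitions A"
      then obtain L where "L \<in> ordered_partitions A" "C = rot L"
        unfolding cyc_rot by blast
      then have L: "opart A L" "C = rot L" using opart_iff by blast+
      then have "x0 \<in> \<Union>(set L)" using x0 unfolding opart_def by auto
      then obtain i where i: "i < length L" "x0 \<in> L ! i" by (auto simp: in_set_conv_nth)
      have Lne: "L \<noteq> []" using i by auto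
      have "hd (rotate i L) = L ! i" using Lne i by (simp add: hd_rotate_conv_nth)
      then have "rotate i L \<in> T" using i L opart_rotate unfolding T_def by auto
      moreover have "rot (rotate i L) = C" using L Lne rot_rotate by metis
      ultimately show "C \<in> rot ` T" by blast
    qed
  qed
  show "inj_on rot T"
  proof
    fix L1 L2 assume L1: "L1 \<in> T" and L2: "L2 \<in> T" and eq: "rot L1 = rot L2"
    have "L2 \<in> rot L1" unfolding eq by (rule rot_self)
    then obtain k where k: "L2 = rotate k L1" unfolding rot_def by auto
    have o1: "opart A L1" and h1: "x0 \<in> hd L1" using L1 unfolding T_def by auto
    have h2: "x0 \<in> hd L2" using L2 unfolding T_def by auto
    have ne: "L1 \<noteq> []" using o1 x0 opart_ne by metis
    let ?j = "k mod length L1"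
    have j: "?j < length L1" using ne by simp
    have xj: "x0 \<in> L1 ! ?j" using h2 k ne by (simp add: hd_rotate_conv_nth)
    have x0': "x0 \<in> L1 ! 0" using h1 ne by (simp add: hd_conv_nth)
    have dis: "distinct L1" "disjoint (set L1)" using o1 opart_iff[of L1 A]
      unfolding ordered_partitions_def partition_on_def by auto
    have "?j = 0"
    proof (rule ccontr)
      assume "?j \<noteq> 0"
      then have "L1 ! ?j \<noteq> L1 ! 0" using dis(1) j ne nth_eq_iff_index_eq by fastforce
      moreover have "L1 ! ?j \<in> set L1" "L1 ! 0 \<in> set L1" using j ne by auto
      ultimately have "L1 ! ?j \<inter> L1 ! 0 = {}" using dis(2)
        by (meson disjnt_def pairwiseD)
      then show False using xj x0' by auto
    qed
    then show "L1 = L2" using k by (metis rotate_conv_mod rotate0 id_apply)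
  qed
qed

definition gw :: "('a set \<Rightarrow> real) \<Rightarrow> 'a set list \<Rightarrow> real" where
  "gw m L = (-1::real) ^ (length L - 1) * prod_list (map m L)"

lemma cumf_lists:
  assumes x0: "x0 \<in> A"
  shows "cumf A m = (\<Sum>L\<in>{L. opart A L \<and> x0 \<in> hd L}. gw m L)"
proof -
  let ?T = "{L. opart A L \<and> x0 \<in> hd L}"
  have "cumf A m = (\<Sum>L\<in>?T. (-1::real) ^ (card (cblocks (rot L)) - 1) * (\<Prod>I\<in>cblocks (rot L). m I))"
    unfolding cumf_def cyc_reindex(1)[OF x0] by (rule sum.reindex[OF cyc_reindex(2)[OF x0], unfolded comp_def])
  also have "\<dots> = (\<Sum>L\<in>?T. gw m L)"
  proof (rule sum.cong)
    fix L assume "L \<in> ?T"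
    then have "distinct L" using opart_iff[of L A] unfolding ordered_partitions_def by auto
    then show "(-1::real) ^ (card (cblocks (rot L)) - 1) * (\<Prod>I\<in>cblocks (rot L). m I) = gw m L"
      unfolding cblocks_rot gw_def by (simp add: distinct_card prod.distinct_set_conv_list)
  qed simp
  finally show ?thesis .
qed


definition spl :: "'a set \<Rightarrow> 'a set list \<Rightarrow> 'a set list" where
  "spl U L = takeWhile (\<lambda>X. X \<subseteq> U) L @ (hd (dropWhile (\<lambda>X. X \<subseteq> U) L) \<inter> U)
     # (hd (dropWhile (\<lambda>X. X \<subseteq> U) L) - U) # tl (dropWhile (\<lambda>X. X \<subseteq> U) L)"

definition mrg :: "'a set \<Rightarrow> 'a set list \<Rightarrow> 'a set list" where
  "mrg U L = butlast (takeWhile (\<lambda>X. X \<subseteq> U) L) @ (last (takeWhile (\<lambda>X. X \<subseteq> U) L) \<union> hd (dropWhile (\<lambda>X. X \<subseteq> U) L))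
     # tl (dropWhile (\<lambda>X. X \<subseteq> U) L)"

lemma spl_eq: "\<forall>X\<in>set P. X \<subseteq> U \<Longrightarrow> \<not> B \<subseteq> U \<Longrightarrow> spl U (P @ B # R) = P @ (B \<inter> U) # (B - U) # R"
  unfolding spl_def by simp

lemma mrg_eq: "\<forall>X\<in>set P. X \<subseteq> U \<Longrightarrow> Y \<subseteq> U \<Longrightarrow> \<not> B \<subseteq> U \<Longrightarrow> mrg U (P @ Y # B # R) = P @ (Y \<union> B) # R"
proof -
  assume a: "\<forall>X\<in>set P. X \<subseteq> U" "Y \<subseteq> U" "\<not> B \<subseteq> U"
  have "P @ Y # B # R = (P @ [Y]) @ B # R" by simp
  moreover have "\<forall>X\<in>set (P @ [Y]). X \<subseteq> U" using a by auto
  ultimately show ?thesis unfolding mrg_def using a(3) by simp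
qed

lemma decomp:
  assumes "\<exists>X\<in>set L. \<not> X \<subseteq> U"
  shows "\<exists>P B R. L = P @ B # R \<and> (\<forall>X\<in>set P. X \<subseteq> U) \<and> \<not> B \<subseteq> U"
proof -
  let ?D = "dropWhile (\<lambda>X. X \<subseteq> U) L"
  have D: "?D \<noteq> []" using assms by (simp add: dropWhile_eq_Nil_conv)
  have "L = takeWhile (\<lambda>X. X \<subseteq> U) L @ hd ?D # tl ?D" using D by simp
  moreover have "\<forall>X\<in>set (takeWhile (\<lambda>X. X \<subseteq> U) L). X \<subseteq> U" by (auto dest: set_takeWhileD)
  moreover have "\<not> hd ?D \<subseteq> U" using D hd_dropWhile by metis
  ultimately show ?thesis by blast
qed

lemma gw_split: "m B = m X * m Y \<Longrightarrow> gw m (P @ X # Y # R) = - gw m (P @ B # R)"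
  unfolding gw_def by (simp add: algebra_simps)

lemma cumf_zero:
  fixes m :: "'a set \<Rightarrow> real"
  assumes fin: "finite A" and x0: "x0 \<in> U" and UA: "U \<subseteq> A" and AU: "\<not> A \<subseteq> U"
    and mult: "\<And>B. B \<subseteq> A \<Longrightarrow> m B = m (B \<inter> U) * m (B - U)"
  shows "cumf A m = 0"
proof -
  define T where "T = {L. opart A L \<and> x0 \<in> hd L}"
  define T1 where "T1 = {L\<in>T. hd (dropWhile (\<lambda>X. X \<subseteq> U) L) \<inter> U \<noteq> {}}"
  define T2 where "T2 = {L\<in>T. hd (dropWhile (\<lambda>X. X \<subseteq> U) L) \<inter> U = {}}"
  have x0A: "x0 \<in> A" using x0 UA by auto
  have ex: "\<exists>X\<in>set L. \<not> X \<subseteq> U" if "L \<in> T" for L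
    using that AU unfolding T_def opart_def by auto
  have finT: "finite T"
  proof (rule finite_subset)
    show "T \<subseteq> {xs. set xs \<subseteq> Pow A \<and> distinct xs}"
      unfolding T_def using opart_iff[where A=A] unfolding ordered_partitions_def opart_def by auto
    show "finite {xs. set xs \<subseteq> Pow A \<and> distinct xs}" using fin by (intro finite_subset_distinct) auto
  qed
  have TU: "T = T1 \<union> T2" "T1 \<inter> T2 = {}" unfolding T1_def T2_def by auto
  have fin12: "finite T1" "finite T2" using finT TU by auto
  have S1: "spl U L \<in> T2 \<and> mrg U (spl U L) = L \<and> gw m (spl U L) = - gw m L" if L: "L \<in> T1" for L
  proof -
    obtain P B R where dec: "L = P @ B # R" "\<forall>X\<in>set P. X \<subseteq> U" "\<not> B \<subseteq> U"
      using decomp[OF ex] L unfolding T1_def by blast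
    have BU: "B \<inter> U \<noteq> {}" using L dec unfolding T1_def by simp
    have oL: "opart A L" and hL: "x0 \<in> hd L" using L unfolding T1_def T_def by auto
    have BA: "B \<subseteq> A" using oL dec unfolding opart_def by auto
    have sp: "spl U L = P @ (B \<inter> U) # (B - U) # R" using dec spl_eq by metis
    have o2: "opart A (P @ (B \<inter> U) # (B - U) # R)"
      using opart_split[of A P B R "B \<inter> U" "B - U"] oL dec BU by auto
    have h2: "x0 \<in> hd (P @ (B \<inter> U) # (B - U) # R)"
      using hL dec x0 by (cases P) auto
    have d2: "dropWhile (\<lambda>X. X \<subseteq> U) (P @ (B \<inter> U) # (B - U) # R) = (B - U) # R"
    proof -
      have "P @ (B \<inter> U) # (B - U) # R = (P @ [B \<inter> U]) @ (B - U) # R" by simp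
      moreover have "\<forall>X\<in>set (P @ [B \<inter> U]). X \<subseteq> U" using dec by auto
      moreover have "\<not> (B - U) \<subseteq> U" using dec by auto
      ultimately show ?thesis by simp
    qed
    have "spl U L \<in> T2" unfolding sp T2_def T_def using o2 h2 d2 by auto
    moreover have "mrg U (spl U L) = L"
    proof -
      have "\<not> (B - U) \<subseteq> U" using dec by auto
      then have "mrg U (spl U L) = P @ (B \<inter> U \<union> (B - U)) # R"
        unfolding sp using mrg_eq[of P U "B \<inter> U" "B - U" R] dec by auto
      also have "B \<inter> U \<union> (B - U) = B" by auto
      finally show ?thesis using dec by simp
    qed
    moreover have "gw m (spl U L) = - gw m L"
    proof -
      have "gw m (P @ (B \<inter> U) # (B - U) # R) = - gw m (P @ B # R)"
        by (rule gw_split) (use mult BA in auto)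
      then show ?thesis using sp dec(1) by simp
    qed
    ultimately show ?thesis by blast
  qed
  have S2: "mrg U L \<in> T1 \<and> spl U (mrg U L) = L" if L: "L \<in> T2" for L
  proof -
    obtain P B R where dec: "L = P @ B # R" "\<forall>X\<in>set P. X \<subseteq> U" "\<not> B \<subseteq> U"
      using decomp[OF ex] L unfolding T2_def by blast
    have BU: "B \<inter> U = {}" using L dec unfolding T2_def by simp
    have oL: "opart A L" and hL: "x0 \<in> hd L" using L unfolding T2_def T_def by auto
    have Pne: "P \<noteq> []" using hL dec BU x0 by auto
    then obtain P' Y where PY: "P = P' @ [Y]" by (metis rev_exhaust)
    have YU: "Y \<subseteq> U" "\<forall>X\<in>set P'. X \<subseteq> U" using dec PY by auto
    have Yne: "Y \<noteq> {}" using oL dec PY unfolding opart_def by auto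
    have L': "L = P' @ Y # B # R" using dec PY by simp
    have mr: "mrg U L = P' @ (Y \<union> B) # R" using L' mrg_eq YU dec by metis
    have o2: "opart A (P' @ (Y \<union> B) # R)" using opart_merge oL L' by metis
    have h2: "x0 \<in> hd (P' @ (Y \<union> B) # R)" using hL L' by (cases P') auto
    have d2: "dropWhile (\<lambda>X. X \<subseteq> U) (P' @ (Y \<union> B) # R) = (Y \<union> B) # R"
      using YU dec by simp
    have "(Y \<union> B) \<inter> U \<noteq> {}" using YU Yne by auto
    then have "mrg U L \<in> T1" unfolding mr T1_def T_def using o2 h2 d2 by auto
    moreover have "spl U (mrg U L) = L"
    proof -
      have "spl U (mrg U L) = P' @ ((Y \<union> B) \<inter> U) # ((Y \<union> B) - U) # R"
        unfolding mr using spl_eq[of P' U "Y \<union> B" R] YU dec by auto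
      also have "(Y \<union> B) \<inter> U = Y" using YU BU by auto
      also have "(Y \<union> B) - U = B" using YU BU by auto
      finally show ?thesis using L' by simp
    qed
    ultimately show ?thesis by blast
  qed
  have bij: "bij_betw (spl U) T1 T2"
    by (rule bij_betw_byWitness[where f'="mrg U"]) (use S1 S2 in auto)
  have "cumf A m = sum (gw m) T" unfolding T_def by (rule cumf_lists[OF x0A])
  also have "\<dots> = sum (gw m) T1 + sum (gw m) T2" using TU fin12 by (simp add: sum.union_disjoint)
  also have "sum (gw m) T2 = sum (\<lambda>L. gw m (spl U L)) T1" using sum.reindex_bij_betw[OF bij, of "gw m"] by simp
  also have "\<dots> = - sum (gw m) T1" using S1 by (simp add: sum_negf)
  finally show ?thesis by simp
qed



fun Rr :: "(nat \<Rightarrow> real) \<Rightarrow> nat \<Rightarrow> nat \<Rightarrow> real" where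
  "Rr Cm s 0 = 1"
| "Rr Cm s (Suc j) = Rr Cm s j * Cm (s + j)"

fun Pp :: "(nat \<Rightarrow> real) \<Rightarrow> (nat \<Rightarrow> real) \<Rightarrow> nat \<Rightarrow> nat \<Rightarrow> real" where
  "Pp Cm Cp t 0 = 1"
| "Pp Cm Cp t (Suc n) = (if n = 0 then Cm t else Cp t * Rr Cm (t + 1) n * Pp Cm Cp (t + 1) n)"

lemma abs_integral_AE_bound:
  fixes g :: "'x \<Rightarrow> real"
  assumes "prob_space M" "AE x in M. \<bar>g x\<bar> \<le> K" "0 \<le> K"
  shows "\<bar>integral\<^sup>L M g\<bar> \<le> K"
proof -
  interpret prob_space M by fact
  have "\<bar>integral\<^sup>L M g\<bar> \<le> (\<integral>x. \<bar>g x\<bar> \<partial>M)" using integral_norm_bound[of M g] by simp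
  also have "\<dots> \<le> (\<integral>x. K \<partial>M)"
    by (rule integral_mono_AE') (use assms in auto)
  also have "\<dots> = K" by (simp add: prob_space)
  finally show ?thesis .
qed

lemma prod_diff_bound:
  fixes a b D :: "'i \<Rightarrow> real"
  assumes "finite P" "\<And>I. I \<in> P \<Longrightarrow> \<bar>a I\<bar> \<le> D I \<and> \<bar>b I\<bar> \<le> D I"
  shows "\<bar>(\<Prod>I\<in>P. a I) - (\<Prod>I\<in>P. b I)\<bar> \<le> (\<Sum>I\<in>P. \<bar>a I - b I\<bar> * (\<Prod>J\<in>P - {I}. D J))"
  using assms
proof (induction P rule: finite_induct)
  case empty
  then show ?case by simp
next
  case (insert x F)
  have D0: "0 \<le> D J" if "J \<in> insert x F" for J using insert.prems[OF that] by linarith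
  have IH: "\<bar>(\<Prod>I\<in>F. a I) - (\<Prod>I\<in>F. b I)\<bar> \<le> (\<Sum>I\<in>F. \<bar>a I - b I\<bar> * (\<Prod>J\<in>F - {I}. D J))"
    using insert by auto
  have pa: "\<bar>\<Prod>I\<in>F. a I\<bar> \<le> (\<Prod>I\<in>F. D I)"
  proof -
    have "\<bar>\<Prod>I\<in>F. a I\<bar> = (\<Prod>I\<in>F. \<bar>a I\<bar>)" by (rule abs_prod)
    also have "\<dots> \<le> (\<Prod>I\<in>F. D I)" by (intro prod_mono) (use insert.prems in auto)
    finally show ?thesis .
  qed
  have "(\<Prod>I\<in>insert x F. a I) - (\<Prod>I\<in>insert x F. b I)
      = (a x - b x) * (\<Prod>I\<in>F. a I) + b x * ((\<Prod>I\<in>F. a I) - (\<Prod>I\<in>F. b I))"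
    using insert by (simp add: algebra_simps)
  then have "\<bar>(\<Prod>I\<in>insert x F. a I) - (\<Prod>I\<in>insert x F. b I)\<bar>
      \<le> \<bar>a x - b x\<bar> * \<bar>\<Prod>I\<in>F. a I\<bar> + \<bar>b x\<bar> * \<bar>(\<Prod>I\<in>F. a I) - (\<Prod>I\<in>F. b I)\<bar>"
    by (metis abs_mult abs_triangle_ineq)
  also have "\<dots> \<le> \<bar>a x - b x\<bar> * (\<Prod>I\<in>F. D I) + D x * (\<Sum>I\<in>F. \<bar>a I - b I\<bar> * (\<Prod>J\<in>F - {I}. D J))"
    by (intro add_mono mult_mono pa IH) (use insert.prems D0 in auto)
  also have "\<dots> = (\<Sum>I\<in>insert x F. \<bar>a I - b I\<bar> * (\<Prod>J\<in>insert x F - {I}. D J))"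
  proof -
    have "insert x F - {x} = F" using insert by auto
    moreover have "(\<Prod>J\<in>insert x F - {I}. D J) = D x * (\<Prod>J\<in>F - {I}. D J)" if "I \<in> F" for I
    proof -
      have "insert x F - {I} = insert x (F - {I})" using that insert by auto
      then show ?thesis using insert by simp
    qed
    ultimately show ?thesis using insert by (simp add: sum_distrib_left algebra_simps)
  qed
  finally show ?case .
qed

lemma fin2: "finite I \<Longrightarrow> finite J \<Longrightarrow> finite {F i j | i j. i \<in> I \<and> j \<in> J}"
  using finite_image_set2[of "\<lambda>i. i \<in> I" "\<lambda>j. j \<in> J" F] by simp

lemma fin2': "finite I \<Longrightarrow> finite {F i j | i j. i \<in> I \<and> j \<in> I \<and> i \<noteq> j}"
  by (rule finite_subset[OF _ fin2[of I I F]]) auto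

lemma dist_le_dupQ:
  fixes h :: "nat \<Rightarrow> 'h::metric_space"
  assumes "finite Q" "J \<in> Q" "finite J" "i \<in> J" "j \<in> J"
  shows "dist (h i) (h j) \<le> dupQ Q h"
proof -
  have "dist (h i) (h j) \<le> dup J h"
    unfolding dup_def by (rule Max_ge) (use assms fin2[of J J "\<lambda>i j. dist (h i) (h j)"] in auto)
  also have "dup J h \<le> dupQ Q h"
  proof -
    have "finite {dup I h | I. I \<in> Q}"
      by (rule finite_subset[of _ "(\<lambda>I. dup I h) ` Q"]) (use assms in auto)
    then show ?thesis unfolding dupQ_def by (rule Max_ge) (use assms in auto)
  qed
  finally show ?thesis .
qed

lemma dlowQ_le_dist:
  fixes h :: "nat \<Rightarrow> 'h::metric_space"
  assumes "finite Q" "I \<in> Q" "J \<in> Q" "I \<noteq> J" "finite I" "finite J" "i \<in> I" "j \<in> J"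
  shows "dlowQ Q h \<le> dist (h i) (h j)"
proof -
  have "finite {dlow I J h | I J. I \<in> Q \<and> J \<in> Q \<and> I \<noteq> J}"
    by (rule finite_subset[OF _ fin2[of Q Q "\<lambda>I J. dlow I J h"]]) (use assms in auto)
  then have "dlowQ Q h \<le> dlow I J h" unfolding dlowQ_def by (rule Min_le) (use assms in auto)
  also have "dlow I J h \<le> dist (h i) (h j)"
    unfolding dlow_def by (rule Min_le) (use assms fin2[of I J "\<lambda>i j. dist (h i) (h j)"] in auto)
  finally show ?thesis .
qed

locale stg =
  fixes M :: "'x measure" and act :: "'h::{group_add,metric_space} \<Rightarrow> 'x \<Rightarrow> 'x"
    and A :: "('x \<Rightarrow> real) set" and N :: "nat \<Rightarrow> ('x \<Rightarrow> real) \<Rightarrow> real"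
    and \<sigma> :: "nat \<Rightarrow> real" and Cm Cp Cl Ce :: "nat \<Rightarrow> real"
  assumes prob: "prob_space M"
    and act_meas: "\<And>h. act h \<in> measurable M M"
    and act_distr: "\<And>h. distr M M (act h) = M"
    and act_add: "\<And>g h x. x \<in> space M \<Longrightarrow> act (g + h) x = act g (act h x)"
    and dist_inv: "\<And>g x y::'h. dist (g + x) (g + y) = dist x y"
    and A_meas: "\<And>f. f \<in> A \<Longrightarrow> f \<in> borel_measurable M"
    and A_mult: "\<And>f g. f \<in> A \<Longrightarrow> g \<in> A \<Longrightarrow> (\<lambda>x. f x * g x) \<in> A"
    and A_lact: "\<And>f h. f \<in> A \<Longrightarrow> lact act h f \<in> A"
    and N_nonneg: "\<And>s f. s \<ge> 1 \<Longrightarrow> f \<in> A \<Longrightarrow> 0 \<le> N s f"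
    and Cm: "\<And>s f. s \<ge> 1 \<Longrightarrow> f \<in> A \<Longrightarrow> N s f \<le> Cm s * N (s + 1) f" "\<And>s. 0 \<le> Cm s"
    and Ce: "\<And>s f. s \<ge> 1 \<Longrightarrow> f \<in> A \<Longrightarrow> AE x in M. \<bar>f x\<bar> \<le> Ce s * N s f" "\<And>s. 1 \<le> Ce s"
    and sig: "\<And>s. s \<ge> 1 \<Longrightarrow> 0 < \<sigma> s" "\<And>s s'. 1 \<le> s \<Longrightarrow> s \<le> s' \<Longrightarrow> \<sigma> s \<le> \<sigma> s'"
    and Cl: "\<And>s f h. s \<ge> 1 \<Longrightarrow> f \<in> A \<Longrightarrow> N s (lact act h f) \<le> Cl s * exp (\<sigma> s * dist h 0) * N s f"
      "\<And>s. 0 \<le> Cl s"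
    and Cp: "\<And>s f g. s \<ge> 1 \<Longrightarrow> f \<in> A \<Longrightarrow> g \<in> A \<Longrightarrow> N s (\<lambda>x. f x * g x) \<le> Cp s * N (s + 1) f * N (s + 1) g"
      "\<And>s. 0 \<le> Cp s"
begin

lemma Rr_nonneg: "0 \<le> Rr Cm s j"
  by (induction j) (auto simp: Cm(2))

lemma Pp_nonneg: "0 \<le> Pp Cm Cp t n"
  by (induction n arbitrary: t) (auto simp: Cm(2) Cp(2) Rr_nonneg)

lemma raise: "s \<ge> 1 \<Longrightarrow> f \<in> A \<Longrightarrow> N s f \<le> Rr Cm s j * N (s + j) f"
proof (induction j)
  case 0
  then show ?case by simp
next
  case (Suc j)
  have "N s f \<le> Rr Cm s j * N (s + j) f" using Suc by simp
  also have "\<dots> \<le> Rr Cm s j * (Cm (s + j) * N (s + j + 1) f)"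
    by (rule mult_left_mono) (use Cm(1) Suc Rr_nonneg in auto)
  finally show ?case by (simp add: algebra_simps)
qed

lemma prod_A:
  assumes "finite S" "S \<noteq> {}" "\<And>i. i \<in> S \<Longrightarrow> \<phi> i \<in> A"
  shows "(\<lambda>x. \<Prod>i\<in>S. \<phi> i x) \<in> A"
  using assms
proof (induction S rule: finite_ne_induct)
  case (singleton x)
  then show ?case by simp
next
  case (insert x F)
  then have "(\<lambda>y. \<phi> x y * (\<Prod>i\<in>F. \<phi> i y)) \<in> A" by (intro A_mult) auto
  then show ?case using insert by simp
qed

lemma prod_N:
  assumes "finite S" "S \<noteq> {}" "\<And>i. i \<in> S \<Longrightarrow> \<phi> i \<in> A"
  shows "\<forall>t\<ge>1. N t (\<lambda>x. \<Prod>i\<in>S. \<phi> i x) \<le> Pp Cm Cp t (card S) * (\<Prod>i\<in>S. N (t + card S) (\<phi> i))"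
  using assms
proof (induction S rule: finite_ne_induct)
  case (singleton a)
  then show ?case using Cm(1) by simp
next
  case (insert a F)
  show ?case
  proof (intro allI impI)
    fix t :: nat assume t: "t \<ge> 1"
    let ?n = "card F"
    have n1: "?n \<ge> 1" using insert by (simp add: Suc_le_eq card_gt_0_iff)
    have pA: "(\<lambda>x. \<Prod>i\<in>F. \<phi> i x) \<in> A" by (rule prod_A) (use insert in auto)
    have aA: "\<phi> a \<in> A" using insert by auto
    have "N t (\<lambda>x. \<Prod>i\<in>insert a F. \<phi> i x) = N t (\<lambda>x. \<phi> a x * (\<Prod>i\<in>F. \<phi> i x))"
      using insert by simp
    also have "\<dots> \<le> Cp t * N (t + 1) (\<phi> a) * N (t + 1) (\<lambda>x. \<Prod>i\<in>F. \<phi> i x)"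
      using Cp(1)[OF t aA pA] .
    also have "\<dots> \<le> Cp t * (Rr Cm (t + 1) ?n * N (t + 1 + ?n) (\<phi> a))
         * (Pp Cm Cp (t + 1) ?n * (\<Prod>i\<in>F. N (t + 1 + ?n) (\<phi> i)))"
    proof (rule mult_mono)
      show "Cp t * N (t + 1) (\<phi> a) \<le> Cp t * (Rr Cm (t + 1) ?n * N (t + 1 + ?n) (\<phi> a))"
      proof (rule mult_left_mono)
        show "N (t + 1) (\<phi> a) \<le> Rr Cm (t + 1) ?n * N (t + 1 + ?n) (\<phi> a)"
          by (rule raise) (use aA in auto)
      qed (use Cp(2) in auto)
      show "N (t + 1) (\<lambda>x. \<Prod>i\<in>F. \<phi> i x) \<le> Pp Cm Cp (t + 1) ?n * (\<Prod>i\<in>F. N (t + 1 + ?n) (\<phi> i))"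
        using insert t by auto
      show "0 \<le> Cp t * (Rr Cm (t + 1) ?n * N (t + 1 + ?n) (\<phi> a))"
        using Cp(2) Rr_nonneg N_nonneg aA by auto
      show "0 \<le> N (t + 1) (\<lambda>x. \<Prod>i\<in>F. \<phi> i x)" using N_nonneg pA by auto
    qed
    also have "\<dots> = Pp Cm Cp t (card (insert a F)) * (\<Prod>i\<in>insert a F. N (t + card (insert a F)) (\<phi> i))"
      using insert n1 by (simp add: algebra_simps)
    finally show "N t (\<lambda>x. \<Prod>i\<in>insert a F. \<phi> i x)
       \<le> Pp Cm Cp t (card (insert a F)) * (\<Prod>i\<in>insert a F. N (t + card (insert a F)) (\<phi> i))" .
  qed
qed

lemma lact_comp:
  assumes "x \<in> space M"
  shows "lact act g (lact act g' f) x = lact act (g + g') f x"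
proof -
  have "act (- g' + - g) x = act (- g') (act (- g) x)" by (rule act_add[OF assms])
  moreover have "- (g + g') = - g' + - g" by (rule minus_add)
  ultimately show ?thesis unfolding lact_def by simp
qed

lemma AE_lact:
  assumes "f \<in> A" "AE y in M. \<bar>f y\<bar> \<le> c"
  shows "AE x in M. \<bar>lact act h f x\<bar> \<le> c"
proof -
  have fm: "f \<in> borel_measurable M" using A_meas assms by auto
  have "{y \<in> space M. \<bar>f y\<bar> \<le> c} \<in> sets M" using fm by measurable
  then have "(AE y in distr M M (act (- h)). \<bar>f y\<bar> \<le> c) \<longleftrightarrow> (AE x in M. \<bar>f (act (- h) x)\<bar> \<le> c)"
    using AE_distr_iff[OF act_meas[of "- h"], of "\<lambda>y. \<bar>f y\<bar> \<le> c"] by blast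
  then show ?thesis using assms(2) unfolding act_distr lact_def by simp
qed

lemma moment_bound:
  assumes "finite B" "f \<in> A" "s \<ge> 1"
  shows "\<bar>integral\<^sup>L M (\<lambda>x. \<Prod>i\<in>B. lact act (h i) f x)\<bar> \<le> (Ce s * N s f) ^ card B"
proof -
  let ?c = "Ce s * N s f"
  have c0: "0 \<le> ?c" using Ce(2)[of s] N_nonneg assms by auto
  have "AE x in M. \<forall>i\<in>B. \<bar>lact act (h i) f x\<bar> \<le> ?c"
    using assms by (intro AE_finite_allI AE_lact Ce(1)) auto
  then have "AE x in M. \<bar>\<Prod>i\<in>B. lact act (h i) f x\<bar> \<le> ?c ^ card B"
  proof (rule AE_mp, intro AE_I2 impI)
    fix x assume "\<forall>i\<in>B. \<bar>lact act (h i) f x\<bar> \<le> ?c"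
    then have "(\<Prod>i\<in>B. \<bar>lact act (h i) f x\<bar>) \<le> (\<Prod>i\<in>B. ?c)"
      by (intro prod_mono) auto
    then show "\<bar>\<Prod>i\<in>B. lact act (h i) f x\<bar> \<le> ?c ^ card B" by (simp add: abs_prod)
  qed
  then show ?thesis using abs_integral_AE_bound[OF prob] c0 by simp
qed


definition mom :: "(nat \<Rightarrow> 'h) \<Rightarrow> ('x \<Rightarrow> real) \<Rightarrow> nat set \<Rightarrow> real" where
  "mom h f I = integral\<^sup>L M (\<lambda>x. \<Prod>i\<in>I. lact act (h i) f x)"

lemma mom_empty: "mom h f {} = 1"
proof -
  interpret prob_space M by (rule prob)
  show ?thesis unfolding mom_def by (simp add: prob_space)
qed

lemma lact_meas: "f \<in> A \<Longrightarrow> lact act h f \<in> borel_measurable M"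
  using A_meas A_lact by blast

lemma integral_lact:
  assumes "F \<in> A"
  shows "integral\<^sup>L M (lact act g F) = integral\<^sup>L M F"
proof -
  have "integral\<^sup>L M F = integral\<^sup>L (distr M M (act (- g))) F" by (simp add: act_distr)
  also have "\<dots> = integral\<^sup>L M (\<lambda>x. F (act (- g) x))"
    by (rule integral_distr[OF act_meas A_meas[OF assms]])
  finally show ?thesis unfolding lact_def by simp
qed

lemma regroup:
  assumes "x \<in> space M"
  shows "lact act (h e) (\<lambda>y. \<Prod>i\<in>S. lact act (- h e + h i) f y) x = (\<Prod>i\<in>S. lact act (h i) f x)"
proof -
  have "lact act (h e) (\<lambda>y. \<Prod>i\<in>S. lact act (- h e + h i) f y) x
      = (\<Prod>i\<in>S. lact act (- h e + h i) f (act (- h e) x))"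
    unfolding lact_def[of act "h e"] by simp
  also have "\<dots> = (\<Prod>i\<in>S. lact act (h e) (lact act (- h e + h i) f) x)"
    unfolding lact_def[of act "h e"] by simp
  also have "\<dots> = (\<Prod>i\<in>S. lact act (h i) f x)"
    using lact_comp[OF assms] by (simp add: add.assoc[symmetric])
  finally show ?thesis .
qed


lemma group_norm:
  assumes f: "f \<in> A" and s0: "s0 \<ge> 1" and S: "finite S" "S \<noteq> {}" "card S \<le> r"
    and d: "\<And>i. i \<in> S \<Longrightarrow> dist (h i) (h e) \<le> \<alpha>" and a0: "0 \<le> \<alpha>"
    and Kf: "Pp Cm Cp s0 (card S) * (Cl (s0 + card S) * Rr Cm (s0 + card S) (r - card S)) ^ card S \<le> Kf"
  shows "N s0 (\<lambda>y. \<Prod>i\<in>S. lact act (- h e + h i) f y)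
     \<le> Kf * exp (\<sigma> (s0 + r) * \<alpha>) ^ card S * N (s0 + r) f ^ card S"
proof -
  let ?n = "card S"
  let ?c1 = "Cl (s0 + ?n) * Rr Cm (s0 + ?n) (r - ?n)"
  let ?E = "exp (\<sigma> (s0 + r) * \<alpha>)"
  let ?Nf = "N (s0 + r) f"
  have \<phi>A: "lact act (- h e + h i) f \<in> A" for i using A_lact f by blast
  have s1: "s0 + ?n \<ge> 1" using s0 by simp
  have Nf0: "0 \<le> ?Nf" using N_nonneg f s0 by simp
  have c10: "0 \<le> ?c1" using Cl(2) Rr_nonneg by simp
  have each: "N (s0 + ?n) (lact act (- h e + h i) f) \<le> ?c1 * ?E * ?Nf" if i: "i \<in> S" for i
  proof -
    have dd: "dist (- h e + h i) 0 = dist (h i) (h e)"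
      using dist_inv[of "h e" "- h e + h i" 0] by (simp add: add.assoc[symmetric])
    have sg: "\<sigma> (s0 + ?n) * dist (- h e + h i) 0 \<le> \<sigma> (s0 + r) * \<alpha>"
    proof (rule mult_mono)
      show "\<sigma> (s0 + ?n) \<le> \<sigma> (s0 + r)" using sig(2)[OF s1] S by simp
      show "dist (- h e + h i) 0 \<le> \<alpha>" using dd d[OF i] by simp
      show "0 \<le> \<sigma> (s0 + r)" using sig(1)[of "s0 + r"] s0 by simp
    qed simp
    have rs: "N (s0 + ?n) f \<le> Rr Cm (s0 + ?n) (r - ?n) * ?Nf"
      using raise[OF s1 f, of "r - ?n"] S by simp
    have "N (s0 + ?n) (lact act (- h e + h i) f)
        \<le> Cl (s0 + ?n) * exp (\<sigma> (s0 + ?n) * dist (- h e + h i) 0) * N (s0 + ?n) f"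
      by (rule Cl(1)[OF s1 f])
    also have "\<dots> \<le> Cl (s0 + ?n) * ?E * (Rr Cm (s0 + ?n) (r - ?n) * ?Nf)"
    proof (rule mult_mono)
      show "Cl (s0 + ?n) * exp (\<sigma> (s0 + ?n) * dist (- h e + h i) 0) \<le> Cl (s0 + ?n) * ?E"
        using sg Cl(2) by (intro mult_left_mono) auto
      show "N (s0 + ?n) f \<le> Rr Cm (s0 + ?n) (r - ?n) * ?Nf" by (rule rs)
      show "0 \<le> Cl (s0 + ?n) * ?E" using Cl(2) by simp
      show "0 \<le> N (s0 + ?n) f" using N_nonneg f s1 by simp
    qed
    also have "\<dots> = ?c1 * ?E * ?Nf" by (simp add: algebra_simps)
    finally show ?thesis .
  qed
  have "N s0 (\<lambda>y. \<Prod>i\<in>S. lact act (- h e + h i) f y)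
      \<le> Pp Cm Cp s0 ?n * (\<Prod>i\<in>S. N (s0 + ?n) (lact act (- h e + h i) f))"
    using prod_N[OF S(1,2), of "\<lambda>i. lact act (- h e + h i) f"] \<phi>A s0 by auto
  also have "\<dots> \<le> Pp Cm Cp s0 ?n * (\<Prod>i\<in>S. ?c1 * ?E * ?Nf)"
  proof (rule mult_left_mono)
    show "(\<Prod>i\<in>S. N (s0 + ?n) (lact act (- h e + h i) f)) \<le> (\<Prod>i\<in>S. ?c1 * ?E * ?Nf)"
      using each N_nonneg[OF s1 \<phi>A] by (intro prod_mono) auto
  qed (rule Pp_nonneg)
  also have "\<dots> = (Pp Cm Cp s0 ?n * ?c1 ^ ?n) * ?E ^ ?n * ?Nf ^ ?n"
    by (simp add: power_mult_distrib)
  also have "\<dots> \<le> Kf * ?E ^ ?n * ?Nf ^ ?n"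
    using Kf Nf0 by (intro mult_right_mono) auto
  finally show ?thesis .
qed


lemma block_bound:
  fixes Q :: "nat set set" and h :: "nat \<Rightarrow> 'h" and B :: "nat set"
  assumes Q: "partition_on {1..r} Q" and B: "B \<subseteq> {1..r}" and f: "f \<in> A" and s0: "s0 \<ge> 1"
    and a0: "0 \<le> \<alpha>" and dQ: "dupQ Q h \<le> \<alpha>" and lQ: "\<beta> < dlowQ Q h" and b0: "0 \<le> \<beta>"
    and del: "\<And>k. 2 \<le> k \<Longrightarrow> k \<le> r \<Longrightarrow> \<delta>r \<le> \<delta> k \<and> 0 \<le> \<delta> k"
    and Kf: "\<And>n. 1 \<le> n \<Longrightarrow> n \<le> r \<Longrightarrow> Pp Cm Cp s0 n * (Cl (s0 + n) * Rr Cm (s0 + n) (r - n)) ^ n \<le> Kf"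
    and Kf1: "1 \<le> Kf" and Cx: "0 \<le> Cx"
    and mix: "\<And>k F g. 2 \<le> k \<Longrightarrow> k \<le> r \<Longrightarrow> (\<forall>i\<in>{1..k}. F i \<in> A) \<Longrightarrow>
        \<bar>integral\<^sup>L M (\<lambda>x. \<Prod>i\<in>{1..k}. lact act (g i) (F i) x) - (\<Prod>i\<in>{1..k}. integral\<^sup>L M (F i))\<bar>
        \<le> Cx * exp (- \<delta> k * Min {dist (g i) (g j) | i j. i \<in> {1..k} \<and> j \<in> {1..k} \<and> i \<noteq> j})
           * (\<Prod>i\<in>{1..k}. N s0 (F i))"
  shows "\<bar>mom h f B - (\<Prod>J\<in>Q. mom h f (B \<inter> J))\<bar>
     \<le> Cx * Kf ^ r * exp (- (\<beta> * \<delta>r - real r * \<alpha> * \<sigma> (s0 + r))) * N (s0 + r) f ^ card B"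
proof -
  have UQ: "\<Union>Q = {1..r}" and disQ: "disjoint Q" and neQ: "{} \<notin> Q"
    using Q unfolding partition_on_def by auto
  have finQ: "finite Q" using UQ by (metis finite_UnionD finite_atLeastAtMost)
  have Jsub: "J \<subseteq> {1..r}" if "J \<in> Q" for J using UQ that by auto
  have finJ: "finite J" if "J \<in> Q" for J using Jsub[OF that] finite_subset by blast
  have Jdis: "J \<inter> J' = {}" if "J \<in> Q" "J' \<in> Q" "J \<noteq> J'" for J J'
    using disQ that unfolding disjoint_def disjnt_def by blast
  have finB: "finite B" using B finite_subset by blast
  have cardB: "card B \<le> r" using card_mono[OF _ B] by simp
  let ?Nf = "N (s0 + r) f"
  let ?X = "exp (- (\<beta> * \<delta>r - real r * \<alpha> * \<sigma> (s0 + r)))"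
  have Nf0: "0 \<le> ?Nf" using N_nonneg f s0 by simp
  have rhs0: "0 \<le> Cx * Kf ^ r * ?X * ?Nf ^ card B" using Cx Kf1 Nf0 by simp
  define QB where "QB = {J\<in>Q. B \<inter> J \<noteq> {}}"
  have finQB: "finite QB" using finQ unfolding QB_def by simp
  have QBQ: "QB \<subseteq> Q" unfolding QB_def by auto
  have mprime: "(\<Prod>J\<in>Q. mom h f (B \<inter> J)) = (\<Prod>J\<in>QB. mom h f (B \<inter> J))"
    by (rule prod.mono_neutral_right[OF finQ QBQ]) (auto simp: QB_def mom_empty)
  have Bunion: "B = \<Union>((\<lambda>J. B \<inter> J) ` QB)"
  proof
    show "B \<subseteq> \<Union>((\<lambda>J. B \<inter> J) ` QB)"
    proof
      fix i assume i: "i \<in> B"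
      then have "i \<in> \<Union>Q" using B UQ by auto
      then obtain J where J: "J \<in> Q" "i \<in> J" by auto
      then have "J \<in> QB" using i unfolding QB_def by auto
      then show "i \<in> \<Union>((\<lambda>J. B \<inter> J) ` QB)" using i J by auto
    qed
  qed auto
  define \<rho> where "\<rho> J = (SOME i. i \<in> B \<inter> J)" for J
  have \<rho>: "\<rho> J \<in> B \<inter> J" if "J \<in> QB" for J
  proof -
    have "\<exists>i. i \<in> B \<inter> J" using that unfolding QB_def by auto
    then show ?thesis unfolding \<rho>_def by (rule someI_ex)
  qed
  have inj\<rho>: "inj_on \<rho> QB"
  proof
    fix J J' assume JJ: "J \<in> QB" "J' \<in> QB" "\<rho> J = \<rho> J'"
    have "\<rho> J \<in> J \<inter> J'" using \<rho>[OF JJ(1)] \<rho>[OF JJ(2)] JJ(3) by auto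
    moreover have "J \<in> Q" "J' \<in> Q" using JJ QBQ by auto
    ultimately show "J = J'" using Jdis by blast
  qed
  have cardQB: "card QB \<le> card B"
    by (rule card_inj_on_le[OF inj\<rho> _ finB]) (use \<rho> in auto)
  show ?thesis
  proof (cases "card QB \<le> 1")
    case True
    have "mom h f B = (\<Prod>J\<in>Q. mom h f (B \<inter> J))"
    proof (cases "QB = {}")
      case True
      then have "B = {}" using Bunion by simp
      then show ?thesis by (simp add: mom_empty)
    next
      case False
      then obtain J0 where J0: "QB = {J0}" using True finQB
        by (metis One_nat_def card_0_eq card_1_singletonE le_SucE le_zero_eq)
      then have "B \<inter> J0 = B" using Bunion by auto
      then show ?thesis using mprime J0 by simp
    qed
    then show ?thesis using rhs0 by simp
  next
    case False
    define k where "k = card QB"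
    have k2: "2 \<le> k" "k \<le> r" using False cardQB cardB unfolding k_def by auto
    obtain en where en: "bij_betw en {1..k} QB"
      using ex_bij_betw_nat_finite_1[OF finQB] unfolding k_def by blast
    have enQB: "en l \<in> QB" if "l \<in> {1..k}" for l using bij_betw_apply[OF en that] .
    define g where "g l = h (\<rho> (en l))" for l
    define FJ where "FJ J = (\<lambda>y. \<Prod>i\<in>B \<inter> J. lact act (- h (\<rho> J) + h i) f y)" for J
    define F where "F l = FJ (en l)" for l
    have FJA: "FJ J \<in> A" if J: "J \<in> QB" for J
    proof -
      have "finite (B \<inter> J)" "B \<inter> J \<noteq> {}" using finB \<rho>[OF J] by auto
      then show ?thesis unfolding FJ_def by (rule prod_A) (rule A_lact[OF f])
    qed
    have FA: "\<forall>l\<in>{1..k}. F l \<in> A"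
    proof
      fix l assume "l \<in> {1..k}"
      then show "F l \<in> A" unfolding F_def by (rule FJA[OF enQB])
    qed
    have FJlact: "lact act (h (\<rho> J)) (FJ J) x = (\<Prod>i\<in>B \<inter> J. lact act (h i) f x)"
      if "x \<in> space M" for J x
      unfolding FJ_def using regroup[OF that, where h=h and e="\<rho> J" and S="B \<inter> J" and f=f] .
    have c: "integral\<^sup>L M (\<lambda>x. \<Prod>l\<in>{1..k}. lact act (g l) (F l) x) = mom h f B"
      unfolding mom_def
    proof (rule Bochner_Integration.integral_cong[OF refl])
      fix x assume x: "x \<in> space M"
      have "(\<Prod>l\<in>{1..k}. lact act (g l) (F l) x) = (\<Prod>l\<in>{1..k}. \<Prod>i\<in>B \<inter> en l. lact act (h i) f x)"
        unfolding g_def F_def using FJlact[OF x] by simp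
      also have "\<dots> = (\<Prod>J\<in>QB. \<Prod>i\<in>B \<inter> J. lact act (h i) f x)"
        by (rule prod.reindex_bij_betw[OF en])
      also have "\<dots> = (\<Prod>i\<in>\<Union>((\<lambda>J. B \<inter> J) ` QB). lact act (h i) f x)"
        by (rule prod.UNION_disjoint[symmetric]) (use finQB finB Jdis QBQ in auto)
      also have "\<dots> = (\<Prod>i\<in>B. lact act (h i) f x)" using Bunion by simp
      finally show "(\<Prod>l\<in>{1..k}. lact act (g l) (F l) x) = (\<Prod>i\<in>B. lact act (h i) f x)" .
    qed
    have d: "(\<Prod>l\<in>{1..k}. integral\<^sup>L M (F l)) = (\<Prod>J\<in>Q. mom h f (B \<inter> J))"
    proof -
      have "integral\<^sup>L M (FJ J) = mom h f (B \<inter> J)" if J: "J \<in> QB" for J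
      proof -
        have "integral\<^sup>L M (FJ J) = integral\<^sup>L M (lact act (h (\<rho> J)) (FJ J))"
          using integral_lact[OF FJA[OF J]] by simp
        also have "\<dots> = mom h f (B \<inter> J)" unfolding mom_def
          by (rule Bochner_Integration.integral_cong[OF refl]) (rule FJlact)
        finally show ?thesis .
      qed
      then have "(\<Prod>l\<in>{1..k}. integral\<^sup>L M (F l)) = (\<Prod>l\<in>{1..k}. mom h f (B \<inter> en l))"
        unfolding F_def using enQB by (intro prod.cong) auto
      also have "\<dots> = (\<Prod>J\<in>QB. mom h f (B \<inter> J))" by (rule prod.reindex_bij_betw[OF en])
      finally show ?thesis using mprime by simp
    qed
    let ?S = "{dist (g i) (g j) | i j. i \<in> {1..k} \<and> j \<in> {1..k} \<and> i \<noteq> j}"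
    have e: "\<beta> \<le> Min ?S"
    proof -
      have "finite ?S" by (rule fin2') simp
      moreover have "?S \<noteq> {}"
      proof -
        have "dist (g 1) (g 2) \<in> ?S" using k2 by force
        then show ?thesis by blast
      qed
      moreover have "\<beta> \<le> d" if "d \<in> ?S" for d
      proof -
        obtain i j where ij: "d = dist (g i) (g j)" "i \<in> {1..k}" "j \<in> {1..k}" "i \<noteq> j"
          using \<open>d \<in> ?S\<close> by blast
        have ne: "en i \<noteq> en j" using en ij unfolding bij_betw_def inj_on_def by blast
        have "dlowQ Q h \<le> dist (g i) (g j)"
          unfolding g_def
          by (rule dlowQ_le_dist[OF finQ, of "en i" "en j"])
             (use ne enQB ij QBQ finJ \<rho> in auto)
        then show ?thesis using lQ ij by simp
      qed
      ultimately show ?thesis by (simp add: Min_ge_iff)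
    qed
    let ?E = "exp (\<sigma> (s0 + r) * \<alpha>)"
    have E1: "1 \<le> ?E" using sig(1)[of "s0 + r"] a0 s0 by simp
    have fN: "(\<Prod>l\<in>{1..k}. N s0 (F l)) \<le> Kf ^ r * ?E ^ r * ?Nf ^ card B"
    proof -
      have each: "N s0 (FJ J) \<le> Kf * ?E ^ card (B \<inter> J) * ?Nf ^ card (B \<inter> J)" if J: "J \<in> QB" for J
      proof -
        have cJ: "1 \<le> card (B \<inter> J)" "card (B \<inter> J) \<le> r"
          using \<rho>[OF J] finB card_mono[of B "B \<inter> J"] cardB
          by (auto simp: Suc_le_eq card_gt_0_iff)
        show ?thesis unfolding FJ_def
        proof (rule group_norm[OF f s0])
          show "finite (B \<inter> J)" "B \<inter> J \<noteq> {}" "card (B \<inter> J) \<le> r" using finB \<rho>[OF J] cJ by auto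
          show "dist (h i) (h (\<rho> J)) \<le> \<alpha>" if "i \<in> B \<inter> J" for i
            using dist_le_dupQ[OF finQ, of J "i" "\<rho> J" h] that \<rho>[OF J] QBQ J finJ dQ by auto
          show "0 \<le> \<alpha>" by (rule a0)
          show "Pp Cm Cp s0 (card (B \<inter> J)) * (Cl (s0 + card (B \<inter> J)) * Rr Cm (s0 + card (B \<inter> J)) (r - card (B \<inter> J))) ^ card (B \<inter> J) \<le> Kf"
            using Kf cJ by blast
        qed
      qed
      have "(\<Prod>l\<in>{1..k}. N s0 (F l)) \<le> (\<Prod>l\<in>{1..k}. Kf * ?E ^ card (B \<inter> en l) * ?Nf ^ card (B \<inter> en l))"
        unfolding F_def using each enQB N_nonneg[OF s0] FJA by (intro prod_mono) auto
      also have "\<dots> = (\<Prod>J\<in>QB. Kf * ?E ^ card (B \<inter> J) * ?Nf ^ card (B \<inter> J))"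
        by (rule prod.reindex_bij_betw[OF en])
      also have "\<dots> = Kf ^ k * ?E ^ (\<Sum>J\<in>QB. card (B \<inter> J)) * ?Nf ^ (\<Sum>J\<in>QB. card (B \<inter> J))"
        by (simp add: prod.distrib power_sum k_def)
      also have "(\<Sum>J\<in>QB. card (B \<inter> J)) = card B"
      proof -
        have "card (\<Union>((\<lambda>J. B \<inter> J) ` QB)) = (\<Sum>J\<in>QB. card (B \<inter> J))"
          by (rule card_UN_disjoint) (use finQB finB Jdis QBQ in auto)
        then show ?thesis using Bunion by simp
      qed
      also have "Kf ^ k * ?E ^ card B * ?Nf ^ card B \<le> Kf ^ r * ?E ^ r * ?Nf ^ card B"
      proof (intro mult_right_mono mult_mono)
        show "Kf ^ k \<le> Kf ^ r" using Kf1 k2 by (intro power_increasing) auto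
        show "?E ^ card B \<le> ?E ^ r" using E1 cardB by (intro power_increasing) auto
      qed (use Kf1 Nf0 in auto)
      finally show ?thesis .
    qed
    have ex: "exp (- \<delta> k * Min ?S) \<le> exp (- (\<beta> * \<delta>r))"
    proof -
      have "\<delta> k * \<beta> \<le> \<delta> k * Min ?S" using del[OF k2] e by (intro mult_left_mono) auto
      moreover have "\<delta>r * \<beta> \<le> \<delta> k * \<beta>" using del[OF k2] b0 by (intro mult_right_mono) auto
      ultimately have "\<beta> * \<delta>r \<le> \<delta> k * Min ?S" by (simp add: mult.commute)
      then show ?thesis by simp
    qed
    have "\<bar>mom h f B - (\<Prod>J\<in>Q. mom h f (B \<inter> J))\<bar>
        = \<bar>integral\<^sup>L M (\<lambda>x. \<Prod>l\<in>{1..k}. lact act (g l) (F l) x) - (\<Prod>l\<in>{1..k}. integral\<^sup>L M (F l))\<bar>"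
      using c d by simp
    also have "\<dots> \<le> Cx * exp (- \<delta> k * Min ?S) * (\<Prod>l\<in>{1..k}. N s0 (F l))"
      by (rule mix[OF k2 FA])
    also have "\<dots> \<le> Cx * exp (- (\<beta> * \<delta>r)) * (Kf ^ r * ?E ^ r * ?Nf ^ card B)"
    proof (rule mult_mono)
      show "Cx * exp (- \<delta> k * Min ?S) \<le> Cx * exp (- (\<beta> * \<delta>r))"
        by (rule mult_left_mono[OF ex Cx])
    qed (use fN Cx N_nonneg[OF s0] FA in \<open>auto intro: prod_nonneg\<close>)
    also have "\<dots> = Cx * Kf ^ r * (exp (- (\<beta> * \<delta>r)) * ?E ^ r) * ?Nf ^ card B"
      by (simp add: algebra_simps)
    also have "exp (- (\<beta> * \<delta>r)) * ?E ^ r = ?X"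
    proof -
      have "?E ^ r = exp (real r * (\<sigma> (s0 + r) * \<alpha>))" by (rule exp_of_nat_mult[symmetric])
      then have "exp (- (\<beta> * \<delta>r)) * ?E ^ r = exp (- (\<beta> * \<delta>r) + real r * (\<sigma> (s0 + r) * \<alpha>))"
        by (simp only: exp_add)
      also have "- (\<beta> * \<delta>r) + real r * (\<sigma> (s0 + r) * \<alpha>) = - (\<beta> * \<delta>r - real r * \<alpha> * \<sigma> (s0 + r))"
        by (simp add: algebra_simps)
      finally show ?thesis .
    qed
    finally show ?thesis .
  qed
qed

end


lemma cblocks_partition: "C \<in> cyc_partitions A \<Longrightarrow> partition_on A (cblocks C)"
  unfolding cyc_rot by (auto simp: cblocks_rot ordered_partitions_def)

lemma cumf_diff_bound:
  assumes "\<And>C. C \<in> cyc_partitions A \<Longrightarrow> \<bar>(\<Prod>I\<in>cblocks C. m I) - (\<Prod>I\<in>cblocks C. m' I)\<bar> \<le> K"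
  shows "\<bar>cumf A m - cumf A m'\<bar> \<le> real (card (cyc_partitions A)) * K"
proof -
  have "cumf A m - cumf A m' = (\<Sum>C\<in>cyc_partitions A. (-1::real) ^ (card (cblocks C) - 1) *
        ((\<Prod>I\<in>cblocks C. m I) - (\<Prod>I\<in>cblocks C. m' I)))"
    unfolding cumf_def by (simp add: sum_subtractf[symmetric] right_diff_distrib)
  also have "\<bar>\<dots>\<bar> \<le> (\<Sum>C\<in>cyc_partitions A. \<bar>(-1::real) ^ (card (cblocks C) - 1) *
        ((\<Prod>I\<in>cblocks C. m I) - (\<Prod>I\<in>cblocks C. m' I))\<bar>)"
    by (rule sum_abs)
  also have "\<dots> \<le> (\<Sum>C\<in>cyc_partitions A. K)"
    by (rule sum_mono) (use assms in \<open>simp add: abs_mult\<close>)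
  also have "\<dots> = real (card (cyc_partitions A)) * K" by simp
  finally show ?thesis .
qed

lemma part_bound:
  fixes m m' :: "nat set \<Rightarrow> real"
  assumes P: "partition_on A P" and finA: "finite A"
    and err: "\<And>I. I \<in> P \<Longrightarrow> \<bar>m I - m' I\<bar> \<le> K * Nf ^ card I"
    and bd: "\<And>I. I \<in> P \<Longrightarrow> \<bar>m I\<bar> \<le> (Db * Nf) ^ card I \<and> \<bar>m' I\<bar> \<le> (Db * Nf) ^ card I"
    and Db: "1 \<le> Db" and Nf: "0 \<le> Nf" and K: "0 \<le> K"
  shows "\<bar>(\<Prod>I\<in>P. m I) - (\<Prod>I\<in>P. m' I)\<bar> \<le> 2 ^ card A * (K * (Db * Nf) ^ card A)"
proof -
  have UP: "\<Union>P = A" and disP: "disjoint P" using P unfolding partition_on_def by auto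
  have finP: "finite P" using UP finA by (metis finite_UnionD)
  have PA: "P \<subseteq> Pow A" using UP by auto
  have cardP: "card P \<le> 2 ^ card A" using card_mono[OF _ PA] finA by (simp add: card_Pow)
  have "card (\<Union>P) = sum card P"
  proof (rule card_Union_disjoint[OF disP])
    fix I assume "I \<in> P"
    then have "I \<subseteq> A" using PA by auto
    then show "finite I" using finA finite_subset by blast
  qed
  then have sumc: "(\<Sum>I\<in>P. card I) = card A" using UP by simp
  have "\<bar>(\<Prod>I\<in>P. m I) - (\<Prod>I\<in>P. m' I)\<bar> \<le> (\<Sum>I\<in>P. \<bar>m I - m' I\<bar> * (\<Prod>J\<in>P - {I}. (Db * Nf) ^ card J))"
    by (rule prod_diff_bound[OF finP bd])
  also have "\<dots> \<le> (\<Sum>I\<in>P. K * (Db * Nf) ^ card A)"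
  proof (rule sum_mono)
    fix I assume I: "I \<in> P"
    have "\<bar>m I - m' I\<bar> * (\<Prod>J\<in>P - {I}. (Db * Nf) ^ card J)
        \<le> (K * (Db * Nf) ^ card I) * (\<Prod>J\<in>P - {I}. (Db * Nf) ^ card J)"
    proof (rule mult_right_mono)
      have "Nf \<le> Db * Nf" using Db Nf mult_right_mono[of 1 Db Nf] by simp
      then have "Nf ^ card I \<le> (Db * Nf) ^ card I" using Nf by (intro power_mono) auto
      then show "\<bar>m I - m' I\<bar> \<le> K * (Db * Nf) ^ card I" using err[OF I] K
        using mult_left_mono[OF \<open>Nf ^ card I \<le> (Db * Nf) ^ card I\<close> K] by linarith
    qed (use Db Nf in \<open>auto intro: prod_nonneg\<close>)
    also have "\<dots> = K * (\<Prod>J\<in>P. (Db * Nf) ^ card J)"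
      using prod.remove[OF finP I, of "\<lambda>J. (Db * Nf) ^ card J"] by simp
    also have "\<dots> = K * (Db * Nf) ^ card A" using sumc by (simp add: power_sum[symmetric])
    finally show "\<bar>m I - m' I\<bar> * (\<Prod>J\<in>P - {I}. (Db * Nf) ^ card J) \<le> K * (Db * Nf) ^ card A" .
  qed
  also have "\<dots> = card P * (K * (Db * Nf) ^ card A)" by simp
  also have "\<dots> \<le> 2 ^ card A * (K * (Db * Nf) ^ card A)"
    using cardP K Db Nf by (intro mult_right_mono) auto
  finally show ?thesis .
qed


context stg
begin

lemma mprime_bound:
  assumes Q: "partition_on {1..r} Q" and I: "I \<subseteq> {1..r}" and f: "f \<in> A" and s: "s \<ge> 1"
  shows "\<bar>\<Prod>J\<in>Q. mom h f (I \<inter> J)\<bar> \<le> (Ce s * N s f) ^ card I"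
proof -
  have UQ: "\<Union>Q = {1..r}" and disQ: "disjoint Q" using Q unfolding partition_on_def by auto
  have finQ: "finite Q" using UQ by (metis finite_UnionD finite_atLeastAtMost)
  have finI: "finite I" using I finite_subset by blast
  let ?c = "Ce s * N s f"
  have c0: "0 \<le> ?c" using Ce(2)[of s] N_nonneg[OF s f] by simp
  have "\<bar>\<Prod>J\<in>Q. mom h f (I \<inter> J)\<bar> = (\<Prod>J\<in>Q. \<bar>mom h f (I \<inter> J)\<bar>)" by (rule abs_prod)
  also have "\<dots> \<le> (\<Prod>J\<in>Q. ?c ^ card (I \<inter> J))"
  proof (rule prod_mono)
    fix J assume "J \<in> Q"
    have "finite (I \<inter> J)" using finI by simp
    then show "0 \<le> \<bar>mom h f (I \<inter> J)\<bar> \<and> \<bar>mom h f (I \<inter> J)\<bar> \<le> ?c ^ card (I \<inter> J)"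
      using moment_bound[OF _ f s, of "I \<inter> J" h] unfolding mom_def by simp
  qed
  also have "\<dots> = ?c ^ (\<Sum>J\<in>Q. card (I \<inter> J))" by (simp add: power_sum)
  also have "(\<Sum>J\<in>Q. card (I \<inter> J)) = card I"
  proof -
    have "card (\<Union>J\<in>Q. I \<inter> J) = (\<Sum>J\<in>Q. card (I \<inter> J))"
    proof (rule card_UN_disjoint[OF finQ])
      show "\<forall>J\<in>Q. finite (I \<inter> J)" using finI by simp
      show "\<forall>J\<in>Q. \<forall>J'\<in>Q. J \<noteq> J' \<longrightarrow> (I \<inter> J) \<inter> (I \<inter> J') = {}"
        using disQ unfolding disjoint_def disjnt_def by blast
    qed
    moreover have "(\<Union>J\<in>Q. I \<inter> J) = I" using I UQ by blast
    ultimately show ?thesis by simp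
  qed
  finally show ?thesis .
qed

end


theorem proposition6p1:
  fixes M :: "'x measure"
    and act :: "'h::{group_add, metric_space, second_countable_topology} \<Rightarrow> 'x \<Rightarrow> 'x"
    and \<A> :: "('x \<Rightarrow> real) set"
    and N :: "nat \<Rightarrow> ('x \<Rightarrow> real) \<Rightarrow> real"
    and \<delta> :: "nat \<Rightarrow> real" and sk :: "nat \<Rightarrow> nat" and \<sigma> :: "nat \<Rightarrow> real"
    and r s :: nat
  assumes "setting M act \<A> N \<delta> sk \<sigma>"
    and "r \<ge> 3"
    and "s > sk r + r"
  shows "\<exists>C. \<forall>Q \<alpha> \<beta> (h :: nat \<Rightarrow> 'h) f.
           partition_on {1..r} Q \<and> card Q \<ge> 2 \<and> 0 \<le> \<alpha> \<and> \<alpha> < \<beta> \<and>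
           h \<in> DeltaQ Q \<alpha> \<beta> \<and> f \<in> \<A> \<longrightarrow>
           \<bar>cum M {1..r} (\<lambda>i. lact act (h i) f)\<bar>
             \<le> C * exp (- (\<beta> * \<delta> r - real r * \<alpha> * \<sigma> s)) * N s f ^ r"
proof -
  note S = assms(1)[unfolded setting_def]
  have F4: "\<forall>g x y::'h. dist (g + x) (g + y) = dist x y" using S by (elim conjE) assumption
  have L_prob: "prob_space M" using S by (elim conjE) assumption
  have F7: "\<forall>h. act h \<in> measurable M M \<and> distr M M (act h) = M" using S by (elim conjE) assumption
  have F9: "\<forall>g h. \<forall>x\<in>space M. act (g + h) x = act g (act h x)" using S by (elim conjE) assumption
  have F10: "\<forall>f\<in>\<A>. f \<in> borel_measurable M" using S by (elim conjE) assumption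
  have F14: "\<forall>f\<in>\<A>. \<forall>g\<in>\<A>. (\<lambda>x. f x * g x) \<in> \<A>" using S by (elim conjE) assumption
  have F16: "\<forall>h. \<forall>f\<in>\<A>. lact act h f \<in> \<A>" using S by (elim conjE) assumption
  have F17: "\<forall>s\<ge>1. \<forall>f\<in>\<A>. 0 \<le> N s f" using S by (elim conjE) assumption
  have F22: "\<forall>s\<ge>1. \<sigma> s > 0" using S by (elim conjE) assumption
  have F26: "\<forall>s s'. 1 \<le> s \<and> s \<le> s' \<longrightarrow> \<sigma> s \<le> \<sigma> s'" using S by (elim conjE) assumption
  have L_am: "\<And>h. act h \<in> measurable M M" using F7 by blast
  have L_ad: "\<And>h. distr M M (act h) = M" using F7 by blast
  have L_add: "\<And>g h x. x \<in> space M \<Longrightarrow> act (g + h) x = act g (act h x)" using F9 by blast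
  have L_dist: "\<And>g x y::'h. dist (g + x) (g + y) = dist x y" using F4 by blast
  have L_Am: "\<And>f. f \<in> \<A> \<Longrightarrow> f \<in> borel_measurable M" using F10 by blast
  have L_Amult: "\<And>f g. f \<in> \<A> \<Longrightarrow> g \<in> \<A> \<Longrightarrow> (\<lambda>x. f x * g x) \<in> \<A>" using F14 by blast
  have L_Alact: "\<And>f h. f \<in> \<A> \<Longrightarrow> lact act h f \<in> \<A>" using F16 by blast
  have L_Nn: "\<And>s f. s \<ge> 1 \<Longrightarrow> f \<in> \<A> \<Longrightarrow> 0 \<le> N s f" using F17 by blast
  have L_sig1: "\<And>s. s \<ge> 1 \<Longrightarrow> 0 < \<sigma> s" using F22 by blast
  have L_sig2: "\<And>s s'. 1 \<le> s \<Longrightarrow> s \<le> s' \<Longrightarrow> \<sigma> s \<le> \<sigma> s'" using F26 by blast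
  have Cmono: "\<forall>s\<ge>1. \<exists>C. \<forall>f\<in>\<A>. N s f \<le> C * N (s + 1) f" using S by (elim conjE) assumption
  have Cess: "\<forall>s\<ge>1. \<exists>C. \<forall>f\<in>\<A>. esssup M (\<lambda>x. ereal \<bar>f x\<bar>) \<le> ereal (C * N s f)" using S by (elim conjE) assumption
  have Clact: "\<forall>s\<ge>1. \<exists>C. \<forall>f\<in>\<A>. \<forall>h. N s (lact act h f) \<le> C * exp (\<sigma> s * dist h 0) * N s f"
    using S by (elim conjE) assumption
  have Cprod: "\<forall>s\<ge>1. \<exists>C. \<forall>f\<in>\<A>. \<forall>g\<in>\<A>. N s (\<lambda>x. f x * g x) \<le> C * N (s + 1) f * N (s + 1) g"
    using S by (elim conjE) assumption
  have Mix: "\<forall>k\<ge>2. \<delta> k > 0 \<and> sk k > 0 \<and>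
       (\<forall>s>sk k. \<exists>C. \<forall>f. \<forall>h. (\<forall>i\<in>{1..k}. f i \<in> \<A>) \<longrightarrow>
          \<bar>integral\<^sup>L M (\<lambda>x. \<Prod>i\<in>{1..k}. lact act (h i) (f i) x)
             - (\<Prod>i\<in>{1..k}. integral\<^sup>L M (f i))\<bar>
          \<le> C * exp (- \<delta> k * Min {dist (h i) (h j) | i j. i \<in> {1..k} \<and> j \<in> {1..k} \<and> i \<noteq> j})
              * (\<Prod>i\<in>{1..k}. N s (f i)))" using S by (elim conjE) assumption
  have skmono: "\<forall>k k'. 2 \<le> k \<and> k \<le> k' \<longrightarrow> sk k \<le> sk k'" using S by (elim conjE) assumption
  have dmono: "\<forall>k k'. 2 \<le> k \<and> k \<le> k' \<longrightarrow> \<delta> k' \<le> \<delta> k" using S by (elim conjE) assumption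

  from Cmono have "\<forall>s. \<exists>C. 1 \<le> s \<longrightarrow> (\<forall>f\<in>\<A>. N s f \<le> C * N (s + 1) f)" by blast
  from choice[OF this] obtain Cm0 where Cm0: "\<forall>s. 1 \<le> s \<longrightarrow> (\<forall>f\<in>\<A>. N s f \<le> Cm0 s * N (s + 1) f)"
    by blast
  define Cm where "Cm s = max 0 (Cm0 s)" for s
  have L_Cm1: "N s f \<le> Cm s * N (s + 1) f" if "s \<ge> 1" "f \<in> \<A>" for s f
  proof -
    have "N s f \<le> Cm0 s * N (s + 1) f" using Cm0 that by blast
    also have "\<dots> \<le> Cm s * N (s + 1) f"
      unfolding Cm_def by (rule mult_right_mono) (use L_Nn that in auto)
    finally show ?thesis .
  qed
  have L_Cm2: "0 \<le> Cm s" for s unfolding Cm_def by simp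

  from Cess have "\<forall>s. \<exists>C. 1 \<le> s \<longrightarrow> (\<forall>f\<in>\<A>. esssup M (\<lambda>x. ereal \<bar>f x\<bar>) \<le> ereal (C * N s f))" by blast
  from choice[OF this] obtain Ce0 where Ce0:
    "\<forall>s. 1 \<le> s \<longrightarrow> (\<forall>f\<in>\<A>. esssup M (\<lambda>x. ereal \<bar>f x\<bar>) \<le> ereal (Ce0 s * N s f))"
    by blast
  define Ce where "Ce s = max 1 (Ce0 s)" for s
  have L_Ce1: "AE x in M. \<bar>f x\<bar> \<le> Ce s * N s f" if s: "s \<ge> 1" and f: "f \<in> \<A>" for s f
  proof -
    have e0: "esssup M (\<lambda>x. ereal \<bar>f x\<bar>) \<le> ereal (Ce0 s * N s f)" using Ce0 s f by blast
    have "AE x in M. ereal \<bar>f x\<bar> \<le> esssup M (\<lambda>x. ereal \<bar>f x\<bar>)" by (rule esssup_AE)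
    then show ?thesis
    proof (rule AE_mp, intro AE_I2 impI)
      fix x assume "ereal \<bar>f x\<bar> \<le> esssup M (\<lambda>x. ereal \<bar>f x\<bar>)"
      then have "ereal \<bar>f x\<bar> \<le> ereal (Ce0 s * N s f)" using e0 by (rule order_trans)
      then have "\<bar>f x\<bar> \<le> Ce0 s * N s f" by simp
      also have "\<dots> \<le> Ce s * N s f"
        unfolding Ce_def by (rule mult_right_mono) (use L_Nn s f in auto)
      finally show "\<bar>f x\<bar> \<le> Ce s * N s f" .
    qed
  qed
  have L_Ce2: "1 \<le> Ce s" for s unfolding Ce_def by simp

  from Clact have "\<forall>s. \<exists>C. 1 \<le> s \<longrightarrow> (\<forall>f\<in>\<A>. \<forall>h. N s (lact act h f) \<le> C * exp (\<sigma> s * dist h 0) * N s f)"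
    by blast
  from choice[OF this] obtain Cl0 where Cl0:
    "\<forall>s. 1 \<le> s \<longrightarrow> (\<forall>f\<in>\<A>. \<forall>h. N s (lact act h f) \<le> Cl0 s * exp (\<sigma> s * dist h 0) * N s f)"
    by blast
  define Cl where "Cl s = max 0 (Cl0 s)" for s
  have L_Cl1: "N s (lact act h f) \<le> Cl s * exp (\<sigma> s * dist h 0) * N s f" if "s \<ge> 1" "f \<in> \<A>" for s f h
  proof -
    have "N s (lact act h f) \<le> Cl0 s * exp (\<sigma> s * dist h 0) * N s f" using Cl0 that by blast
    also have "\<dots> \<le> Cl s * exp (\<sigma> s * dist h 0) * N s f"
    proof (rule mult_right_mono[OF mult_right_mono])
      show "Cl0 s \<le> Cl s" unfolding Cl_def by simp
    qed (use L_Nn that in auto)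
    finally show ?thesis .
  qed
  have L_Cl2: "0 \<le> Cl s" for s unfolding Cl_def by simp

  from Cprod have "\<forall>s. \<exists>C. 1 \<le> s \<longrightarrow> (\<forall>f\<in>\<A>. \<forall>g\<in>\<A>. N s (\<lambda>x. f x * g x) \<le> C * N (s + 1) f * N (s + 1) g)"
    by blast
  from choice[OF this] obtain Cp0 where Cp0:
    "\<forall>s. 1 \<le> s \<longrightarrow> (\<forall>f\<in>\<A>. \<forall>g\<in>\<A>. N s (\<lambda>x. f x * g x) \<le> Cp0 s * N (s + 1) f * N (s + 1) g)"
    by blast
  define Cp where "Cp s = max 0 (Cp0 s)" for s
  have L_Cp1: "N s (\<lambda>x. f x * g x) \<le> Cp s * N (s + 1) f * N (s + 1) g"
    if "s \<ge> 1" "f \<in> \<A>" "g \<in> \<A>" for s f g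
  proof -
    have "N s (\<lambda>x. f x * g x) \<le> Cp0 s * N (s + 1) f * N (s + 1) g" using Cp0 that by blast
    also have "\<dots> \<le> Cp s * N (s + 1) f * N (s + 1) g"
    proof (rule mult_right_mono[OF mult_right_mono])
      show "Cp0 s \<le> Cp s" unfolding Cp_def by simp
    qed (use L_Nn that in auto)
    finally show ?thesis .
  qed
  have L_Cp2: "0 \<le> Cp s" for s unfolding Cp_def by simp

  interpret st: stg M act \<A> N \<sigma> Cm Cp Cl Ce
    by (rule stg.intro[where M=M and act=act and A=\<A> and N=N and \<sigma>=\<sigma> and Cm=Cm and Cp=Cp and Cl=Cl and Ce=Ce, OF L_prob L_am L_ad L_add L_dist L_Am L_Amult L_Alact L_Nn L_Cm1 L_Cm2
          L_Ce1 L_Ce2 L_sig1 L_sig2 L_Cl1 L_Cl2 L_Cp1 L_Cp2])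

  define s0 where "s0 = s - r"
  have s0r: "s0 + r = s" and s0sk: "sk r < s0" using assms(3) unfolding s0_def by auto
  have s01: "s0 \<ge> 1" using s0sk by simp

  have "\<forall>k. \<exists>C. 2 \<le> k \<and> k \<le> r \<longrightarrow> (\<forall>F g. (\<forall>i\<in>{1..k}. F i \<in> \<A>) \<longrightarrow>
          \<bar>integral\<^sup>L M (\<lambda>x. \<Prod>i\<in>{1..k}. lact act (g i) (F i) x) - (\<Prod>i\<in>{1..k}. integral\<^sup>L M (F i))\<bar>
          \<le> C * exp (- \<delta> k * Min {dist (g i) (g j) | i j. i \<in> {1..k} \<and> j \<in> {1..k} \<and> i \<noteq> j})
              * (\<Prod>i\<in>{1..k}. N s0 (F i)))"
  proof
    fix k
    show "\<exists>C. 2 \<le> k \<and> k \<le> r \<longrightarrow> (\<forall>F g. (\<forall>i\<in>{1..k}. F i \<in> \<A>) \<longrightarrow>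
          \<bar>integral\<^sup>L M (\<lambda>x. \<Prod>i\<in>{1..k}. lact act (g i) (F i) x) - (\<Prod>i\<in>{1..k}. integral\<^sup>L M (F i))\<bar>
          \<le> C * exp (- \<delta> k * Min {dist (g i) (g j) | i j. i \<in> {1..k} \<and> j \<in> {1..k} \<and> i \<noteq> j})
              * (\<Prod>i\<in>{1..k}. N s0 (F i)))"
    proof (cases "2 \<le> k \<and> k \<le> r")
      case True
      then have "sk k \<le> sk r" using skmono by blast
      then have "s0 > sk k" using s0sk by simp
      then show ?thesis using Mix True by blast
    next
      case False
      then show ?thesis by blast
    qed
  qed
  from choice[OF this] obtain Cx0 where Cx0: "\<forall>k. 2 \<le> k \<and> k \<le> r \<longrightarrow> (\<forall>F g. (\<forall>i\<in>{1..k}. F i \<in> \<A>) \<longrightarrow>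
          \<bar>integral\<^sup>L M (\<lambda>x. \<Prod>i\<in>{1..k}. lact act (g i) (F i) x) - (\<Prod>i\<in>{1..k}. integral\<^sup>L M (F i))\<bar>
          \<le> Cx0 k * exp (- \<delta> k * Min {dist (g i) (g j) | i j. i \<in> {1..k} \<and> j \<in> {1..k} \<and> i \<noteq> j})
              * (\<Prod>i\<in>{1..k}. N s0 (F i)))" by blast
  define Cx where "Cx = (\<Sum>k\<le>r. max 0 (Cx0 k))"
  have Cx0le: "Cx0 k \<le> Cx" if "k \<le> r" for k
  proof -
    have "max 0 (Cx0 k) \<le> Cx" unfolding Cx_def
      by (rule member_le_sum[of k "{..r}" "\<lambda>k. max 0 (Cx0 k)"]) (use that in auto)
    then show ?thesis by simp
  qed
  have Cx0': "0 \<le> Cx" unfolding Cx_def by (rule sum_nonneg) simp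
  have mix: "\<bar>integral\<^sup>L M (\<lambda>x. \<Prod>i\<in>{1..k}. lact act (g i) (F i) x) - (\<Prod>i\<in>{1..k}. integral\<^sup>L M (F i))\<bar>
        \<le> Cx * exp (- \<delta> k * Min {dist (g i) (g j) | i j. i \<in> {1..k} \<and> j \<in> {1..k} \<and> i \<noteq> j})
           * (\<Prod>i\<in>{1..k}. N s0 (F i))"
    if k: "2 \<le> k" "k \<le> r" and F: "\<forall>i\<in>{1..k}. F i \<in> \<A>" for k F g
  proof -
    let ?e = "exp (- \<delta> k * Min {dist (g i) (g j) | i j. i \<in> {1..k} \<and> j \<in> {1..k} \<and> i \<noteq> j})"
    have P0: "0 \<le> (\<Prod>i\<in>{1..k}. N s0 (F i))" using F L_Nn[OF s01] by (intro prod_nonneg) auto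
    have "\<bar>integral\<^sup>L M (\<lambda>x. \<Prod>i\<in>{1..k}. lact act (g i) (F i) x) - (\<Prod>i\<in>{1..k}. integral\<^sup>L M (F i))\<bar>
        \<le> Cx0 k * ?e * (\<Prod>i\<in>{1..k}. N s0 (F i))" using Cx0 k F by blast
    also have "\<dots> \<le> Cx * ?e * (\<Prod>i\<in>{1..k}. N s0 (F i))"
      by (rule mult_right_mono[OF mult_right_mono[OF Cx0le[OF k(2)]]]) (use P0 in auto)
    finally show ?thesis .
  qed

  define G where "G n = Pp Cm Cp s0 n * (Cl (s0 + n) * Rr Cm (s0 + n) (r - n)) ^ n" for n
  define Kf where "Kf = 1 + (\<Sum>n\<le>r. \<bar>G n\<bar>)"
  have Kf1: "1 \<le> Kf" unfolding Kf_def by (simp add: sum_nonneg)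
  have Kf: "G n \<le> Kf" if "n \<le> r" for n
  proof -
    have "\<bar>G n\<bar> \<le> (\<Sum>n\<le>r. \<bar>G n\<bar>)" by (rule member_le_sum) (use that in auto)
    then show ?thesis unfolding Kf_def by simp
  qed

  have r1: "finite {1..r}" by simp
  define Cfin where "Cfin = real (card (cyc_partitions {1..r :: nat})) * (2 ^ r * (Cx * Kf ^ r * Ce s ^ r))"
  show ?thesis
  proof (intro exI allI impI)
    fix Q \<alpha> \<beta> and h :: "nat \<Rightarrow> 'h" and f
    assume H: "partition_on {1..r} Q \<and> 2 \<le> card Q \<and> 0 \<le> \<alpha> \<and> \<alpha> < \<beta> \<and> h \<in> DeltaQ Q \<alpha> \<beta> \<and> f \<in> \<A>"
    then have Q: "partition_on {1..r} Q" and cQ: "2 \<le> card Q" and a0: "0 \<le> \<alpha>" and ab: "\<alpha> < \<beta>"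
      and hD: "h \<in> DeltaQ Q \<alpha> \<beta>" and f: "f \<in> \<A>" by auto
    have dQ: "dupQ Q h \<le> \<alpha>" and lQ: "\<beta> < dlowQ Q h" using hD unfolding DeltaQ_def by auto
    have b0: "0 \<le> \<beta>" using a0 ab by simp
    have UQ: "\<Union>Q = {1..r}" and disQ: "disjoint Q" and neQ: "{} \<notin> Q"
      using Q unfolding partition_on_def by auto
    have finQ: "finite Q" using UQ by (metis finite_UnionD finite_atLeastAtMost)
    define m where "m = st.mom h f"
    define m' where "m' B = (\<Prod>J\<in>Q. m (B \<inter> J))" for B
    let ?X = "exp (- (\<beta> * \<delta> r - real r * \<alpha> * \<sigma> s))"
    let ?Nf = "N s f"
    have s1: "s \<ge> 1" using s01 s0r by simp
    have Nf0: "0 \<le> ?Nf" using L_Nn[OF s1 f] .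
    have cumeq: "cum M {1..r} (\<lambda>i. lact act (h i) f) = cumf {1..r} m"
      unfolding cum_def cumf_def m_def st.mom_def by simp
    have cum0: "cumf {1..r} m' = 0"
    proof -
      have "Q \<noteq> {}" using cQ by auto
      then obtain J0 where J0: "J0 \<in> Q" by auto
      have c1: "card (Q - {J0}) \<ge> 1" using cQ J0 finQ by simp
      have "Q - {J0} \<noteq> {}"
      proof
        assume "Q - {J0} = {}"
        then have "card (Q - {J0}) = 0" by (simp only: card.empty)
        then show False using c1 by simp
      qed
      then obtain J1 where J1: "J1 \<in> Q" "J1 \<noteq> J0" by auto
      have "J0 \<noteq> {}" using neQ J0 by auto
      then obtain x0 where x0: "x0 \<in> J0" by auto
      have "J1 \<noteq> {}" using neQ J1 by auto
      then obtain y where y: "y \<in> J1" by auto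
      have dis: "J \<inter> J' = {}" if "J \<in> Q" "J' \<in> Q" "J \<noteq> J'" for J J'
        using disQ that unfolding disjoint_def disjnt_def by blast
      have yn: "y \<notin> J0" using dis[OF J1(1) J0 J1(2)] y by auto
      have yr: "y \<in> {1..r}" using y J1 UQ by auto
      have J0r: "J0 \<subseteq> {1..r}" using J0 UQ by auto
      have m_empty: "m {} = 1" unfolding m_def by (rule st.mom_empty)
      show ?thesis
      proof (rule cumf_zero[OF r1 x0 J0r])
        show "\<not> {1..r} \<subseteq> J0" using yn yr by auto
        fix B :: "nat set" assume B: "B \<subseteq> {1..r}"
        have e1: "m' (B \<inter> J0) = m (B \<inter> J0)"
        proof -
          have "m' (B \<inter> J0) = m (B \<inter> J0 \<inter> J0) * (\<Prod>J\<in>Q - {J0}. m (B \<inter> J0 \<inter> J))"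
            unfolding m'_def by (rule prod.remove[OF finQ J0])
          also have "(\<Prod>J\<in>Q - {J0}. m (B \<inter> J0 \<inter> J)) = 1"
          proof (rule prod.neutral, intro ballI)
            fix J assume "J \<in> Q - {J0}"
            then have "J0 \<inter> J = {}" using dis J0 by auto
            then have "B \<inter> J0 \<inter> J = {}" by auto
            then show "m (B \<inter> J0 \<inter> J) = 1" using m_empty by simp
          qed
          finally show ?thesis by simp
        qed
        have e2: "m' (B - J0) = (\<Prod>J\<in>Q - {J0}. m (B \<inter> J))"
        proof -
          have "m' (B - J0) = m ((B - J0) \<inter> J0) * (\<Prod>J\<in>Q - {J0}. m ((B - J0) \<inter> J))"
            unfolding m'_def by (rule prod.remove[OF finQ J0])
          also have "(B - J0) \<inter> J0 = {}" by auto
          also have "(\<Prod>J\<in>Q - {J0}. m ((B - J0) \<inter> J)) = (\<Prod>J\<in>Q - {J0}. m (B \<inter> J))"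
          proof (rule prod.cong[OF refl])
            fix J assume "J \<in> Q - {J0}"
            then have "J0 \<inter> J = {}" using dis J0 by auto
            then have "(B - J0) \<inter> J = B \<inter> J" by auto
            then show "m ((B - J0) \<inter> J) = m (B \<inter> J)" by simp
          qed
          finally show ?thesis using m_empty by simp
        qed
        have "m' B = m (B \<inter> J0) * (\<Prod>J\<in>Q - {J0}. m (B \<inter> J))"
          unfolding m'_def by (rule prod.remove[OF finQ J0])
        then show "m' B = m' (B \<inter> J0) * m' (B - J0)" using e1 e2 by simp
      qed
    qed
    have blk: "\<bar>m I - m' I\<bar> \<le> (Cx * Kf ^ r * ?X) * ?Nf ^ card I" if I: "I \<subseteq> {1..r}" for I
    proof -
      have "\<bar>st.mom h f I - (\<Prod>J\<in>Q. st.mom h f (I \<inter> J))\<bar>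
          \<le> Cx * Kf ^ r * exp (- (\<beta> * \<delta> r - real r * \<alpha> * \<sigma> (s0 + r))) * N (s0 + r) f ^ card I"
      proof (rule st.block_bound[OF Q I f s01 a0 dQ lQ b0 _ _ Kf1 Cx0' mix])
        show "\<delta> r \<le> \<delta> k \<and> 0 \<le> \<delta> k" if "2 \<le> k" "k \<le> r" for k
          using dmono Mix that by force
        show "Pp Cm Cp s0 n * (Cl (s0 + n) * Rr Cm (s0 + n) (r - n)) ^ n \<le> Kf" if "1 \<le> n" "n \<le> r" for n
          using Kf[OF that(2)] unfolding G_def .
      qed
      then show ?thesis unfolding m_def m'_def s0r by (simp add: algebra_simps)
    qed
    have bnd: "\<bar>m I\<bar> \<le> (Ce s * ?Nf) ^ card I \<and> \<bar>m' I\<bar> \<le> (Ce s * ?Nf) ^ card I"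
      if I: "I \<subseteq> {1..r}" for I
    proof
      have "finite I" using I finite_subset by blast
      then show "\<bar>m I\<bar> \<le> (Ce s * ?Nf) ^ card I"
        unfolding m_def st.mom_def by (rule st.moment_bound[OF _ f s1])
      show "\<bar>m' I\<bar> \<le> (Ce s * ?Nf) ^ card I"
        unfolding m'_def m_def by (rule st.mprime_bound[OF Q I f s1])
    qed
    have K0: "0 \<le> Cx * Kf ^ r * ?X" using Cx0' Kf1 by simp
    have "\<bar>cumf {1..r} m - cumf {1..r} m'\<bar>
        \<le> real (card (cyc_partitions {1..r})) * (2 ^ card {1..r} * ((Cx * Kf ^ r * ?X) * (Ce s * ?Nf) ^ card {1..r}))"
    proof (rule cumf_diff_bound)
      fix C assume C: "C \<in> cyc_partitions {1..r}"
      have P: "partition_on {1..r} (cblocks C)" by (rule cblocks_partition[OF C])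
      have sub: "I \<subseteq> {1..r}" if "I \<in> cblocks C" for I
        using P that unfolding partition_on_def by auto
      show "\<bar>(\<Prod>I\<in>cblocks C. m I) - (\<Prod>I\<in>cblocks C. m' I)\<bar>
          \<le> 2 ^ card {1..r} * ((Cx * Kf ^ r * ?X) * (Ce s * ?Nf) ^ card {1..r})"
        by (rule part_bound[OF P r1 blk[OF sub] bnd[OF sub] L_Ce2 Nf0 K0])
    qed
    then have "\<bar>cum M {1..r} (\<lambda>i. lact act (h i) f)\<bar>
        \<le> real (card (cyc_partitions {1..r})) * (2 ^ r * ((Cx * Kf ^ r * ?X) * (Ce s * ?Nf) ^ r))"
      using cumeq cum0 by simp
    also have "\<dots> = Cfin * ?X * ?Nf ^ r"
      unfolding Cfin_def by (simp add: power_mult_distrib algebra_simps)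
    finally show "\<bar>cum M {1..r} (\<lambda>i. lact act (h i) f)\<bar> \<le> Cfin * ?X * N s f ^ r" .
  qed
qed

end
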